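(* Let $N,d\in\mathbb{N}^+$, $\Sigma\in\mathbb{R}^{d\times d}$ symmetric positive semidefinite, $\mu\in\mathbb{R}^{dN}$, and let $\Gamma\in\mathbb{R}^{N\times N}$ with $\Gamma_{ij}=\exp(-\|e_i-e_j\|_2^\nu/\ell)$, where $e_1,\dots,e_N\in\mathbb{R}^{d_e}$ satisfy $\|e_i\|_2=r$ for all $i$ and $\|e_i-e_j\|_2=f(|i-j|)\ge c|i-j|$ for a positive increasing function $f$ and an absolute constant $c>0$, with $\nu\in[1,2]$ and $0<\ell\le c^\nu$. Fix $t\in(0,T]$, $v_t\in\mathbb{R}^{dN}$, $\alpha_t=e^{-t/2}$, $\sigma_t=\sqrt{1-e^{-t}}$, and $\nabla\log p_t(v_t)=-(\alpha_t^2(\Gamma\otimes\Sigma)+\sigma_t^2I)^{-1}(v_t-\alpha_t\mu)$. For an integer $J<N$ let $\bar\Gamma_{ij}=\Gamma_{ij}\mathbf{1}\{|i-j|<J\}$, and let $s^{(K)}(v_t)$ be the $K$-th iterate, $K=O(\kappa_t\log(1/\epsilon))$, of the gradient descent $$s^{(k+1)}=s^{(k)}-\eta_t\Big(\big(\alpha_t^2(\bar\Gamma\otimes\Sigma)+\sigma_t^2 I\big)s^{(k)}+(v_t-\alpha_t\mu)\Big),\qquad s^{(0)}=0,$$ with a suitable step size $\eta_t$, where $\kappa_t$ is the condition number of $\alpha_t^2(\bar\Gamma\otimes\Sigma)+\sigma_t^2I$. Then for any $\epsilon<\lambda_{\min}(\Gamma)$, choosing $J=O\big((\ell\log(N/(\epsilon\sigma_t)))^{1/\nu}\big)$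 gives $$\big\|s^{(K)}(v_t)-\nabla\log p_t(v_t)\big\|_2\le 2\sigma_t^{-2}\|v_t-\alpha_t\mu\|_2\,\epsilon .$$
   Context: $\otimes$ is the Kronecker product; $\lambda_{\min}$ denotes the smallest eigenvalue; the condition number of a positive definite matrix is the ratio of its largest to smallest eigenvalue. The vectors $e_i$ are time (position) embeddings of a uniform time grid $h_1,\dots,h_N$, and $\Gamma_{ij}=\gamma(h_i,h_j)$ is the temporal covariance of a Gaussian process. *)

theory Defs
  imports "HOL-Analysis.Analysis" "Jordan_Normal_Form.Gauss_Jordan_Elimination" "Jordan_Normal_Form.Char_Poly"
begin

definition vnorm :: "real vec \<Rightarrow> real" where
  "vnorm x = sqrt (\<Sum>i<dim_vec x. (x $ i)^2)"

text \<open>Kronecker product of an N x N matrix G with a d x d matrix S, index (i,a) <-> i*d+a.\<close>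
definition kron :: "real mat \<Rightarrow> real mat \<Rightarrow> real mat" where
  "kron G S = mat (dim_row G * dim_row S) (dim_col G * dim_col S)
     (\<lambda>(p,q). G $$ (p div dim_row S, q div dim_col S) * S $$ (p mod dim_row S, q mod dim_col S))"

definition sym_psd :: "nat \<Rightarrow> real mat \<Rightarrow> bool" where
  "sym_psd n S \<longleftrightarrow> S \<in> carrier_mat n n \<and> transpose_mat S = S \<and>
     (\<forall>x \<in> carrier_vec n. x \<bullet> (S *\<^sub>v x) \<ge> 0)"

definition lambda_min :: "real mat \<Rightarrow> real" where
  "lambda_min A = Min {k. eigenvalue A k}"

definition lambda_max :: "real mat \<Rightarrow> real" where
  "lambda_max A = Max {k. eigenvalue A k}"

definition cond_num :: "real mat \<Rightarrow> real" where
  "cond_num A = lambda_max A / lambda_min A"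

definition minv :: "real mat \<Rightarrow> real mat" where
  "minv A = the (mat_inverse A)"

fun gd_iter :: "real mat \<Rightarrow> real vec \<Rightarrow> real \<Rightarrow> nat \<Rightarrow> real vec" where
  "gd_iter M b eta 0 = 0\<^sub>v (dim_vec b)"
| "gd_iter M b eta (Suc k) =
     gd_iter M b eta k - eta \<cdot>\<^sub>v (M *\<^sub>v gd_iter M b eta k + b)"

definition Gamma_mat :: "nat \<Rightarrow> (nat \<Rightarrow> real vec) \<Rightarrow> real \<Rightarrow> real \<Rightarrow> real mat" where
  "Gamma_mat N e nu l = mat N N (\<lambda>(i,j). exp (- (vnorm (e i - e j) powr nu) / l))"

definition band_trunc :: "nat \<Rightarrow> real mat \<Rightarrow> real mat" where
  "band_trunc J G = mat (dim_row G) (dim_col G)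
     (\<lambda>(i,j). if (if i \<le> j then j - i else i - j) < J then G $$ (i,j) else 0)"

definition alpha_t :: "real \<Rightarrow> real" where "alpha_t t = exp (- t / 2)"
definition sigma_t :: "real \<Rightarrow> real" where "sigma_t t = sqrt (1 - exp (- t))"

definition prec_mat :: "real \<Rightarrow> real mat \<Rightarrow> real mat \<Rightarrow> real mat" where
  "prec_mat t G S = (alpha_t t)^2 \<cdot>\<^sub>m kron G S + (sigma_t t)^2 \<cdot>\<^sub>m 1\<^sub>m (dim_row G * dim_row S)"

definition score :: "real \<Rightarrow> real mat \<Rightarrow> real mat \<Rightarrow> real vec \<Rightarrow> real vec \<Rightarrow> real vec" where
  "score t G S mu v = - (minv (prec_mat t G S) *\<^sub>v (v - alpha_t t \<cdot>\<^sub>v mu))"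

end

theory Submission
  imports Defs
begin

unbundle no inner_syntax
no_notation vec_nth (infixl \<open>$\<close> 90)

lemma qf_expand:
  assumes A: "A \<in> carrier_mat n n" and x: "x \<in> carrier_vec n" and y: "y \<in> carrier_vec n"
  shows "x \<bullet> (A *\<^sub>v y) = (\<Sum>i<n. \<Sum>j<n. x $ i * A $$ (i,j) * y $ j)"
  using A x y
  by (auto simp: scalar_prod_def mult_mat_vec_def row_def sum_distrib_left atLeast0LessThan
      intro!: sum.cong simp: algebra_simps)

lemma qf_sym:
  fixes A :: "real mat"
  assumes A: "A \<in> carrier_mat n n" and sym: "transpose_mat A = A"
    and x: "x \<in> carrier_vec n" and y: "y \<in> carrier_vec n"
  shows "x \<bullet> (A *\<^sub>v y) = y \<bullet> (A *\<^sub>v x)"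
proof -
  have "x \<bullet> (A *\<^sub>v y) = (transpose_mat A *\<^sub>v x) \<bullet> y"
    using transpose_vec_mult_scalar[OF A y x] by simp
  also have "\<dots> = y \<bullet> (A *\<^sub>v x)" using sym A x y by (simp add: comm_scalar_prod[of _ n])
  finally show ?thesis .
qed

lemma vnorm_alt: "vnorm x = sqrt (x \<bullet> x)"
  unfolding vnorm_def scalar_prod_def by (simp add: atLeast0LessThan power2_eq_square)

lemma self_sp_nonneg: "(x::real vec) \<bullet> x \<ge> 0"
  unfolding scalar_prod_def by (auto intro: sum_nonneg)

lemma self_sp_zero: assumes "x \<in> carrier_vec n" "(x::real vec) \<bullet> x = 0" shows "x = 0\<^sub>v n"
proof -
  have "\<forall>i\<in>{0..<n}. x $ i * x $ i = 0"
    using assms sum_nonneg_eq_0_iff[of "{0..<n}" "\<lambda>i. x $ i * x $ i"]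
    unfolding scalar_prod_def by auto
  then show ?thesis using assms by (auto intro!: eq_vecI)
qed

lemma vnorm_nonneg: "vnorm x \<ge> 0" by (simp add: vnorm_alt self_sp_nonneg)

lemma vnorm_sq: "(vnorm x)^2 = x \<bullet> x" by (simp add: vnorm_alt self_sp_nonneg)

lemma vnorm_le_from_sq: assumes "x \<bullet> x \<le> c^2" "c \<ge> 0" shows "vnorm x \<le> c"
proof -
  have "sqrt (x \<bullet> x) \<le> sqrt (c^2)" using assms(1) by (rule real_sqrt_le_mono)
  then show ?thesis using assms(2) by (simp add: vnorm_alt)
qed

lemma psd_kernel:
  fixes A :: "real mat"
  assumes A: "A \<in> carrier_mat n n" and sym: "transpose_mat A = A"
    and psd: "\<And>y. y \<in> carrier_vec n \<Longrightarrow> y \<bullet> (A *\<^sub>v y) \<ge> 0"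
    and x: "x \<in> carrier_vec n" and x0: "x \<bullet> (A *\<^sub>v x) = 0"
  shows "A *\<^sub>v x = 0\<^sub>v n"
proof -
  define u where "u = A *\<^sub>v x"
  have u: "u \<in> carrier_vec n" using A x by (simp add: u_def)
  define a where "a = u \<bullet> u"
  define c where "c = u \<bullet> (A *\<^sub>v u)"
  have c0: "c \<ge> 0" using psd[OF u] by (simp add: c_def)
  have a0: "a \<ge> 0" by (simp add: a_def self_sp_nonneg)
  have key: "- 2 * s * a + s^2 * c \<ge> 0" for s :: real
  proof -
    define z where "z = x + (- s) \<cdot>\<^sub>v u"
    have z: "z \<in> carrier_vec n" using x u by (simp add: z_def)
    have Az: "A *\<^sub>v z = u + (- s) \<cdot>\<^sub>v (A *\<^sub>v u)"
      unfolding z_def using A x u by (simp add: mult_add_distrib_mat_vec u_def mult_mat_vec)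
    have xu: "x \<bullet> (A *\<^sub>v u) = a"
      using qf_sym[OF A sym x u] by (simp add: a_def u_def)
    have Au: "A *\<^sub>v u \<in> carrier_vec n" using A u by simp
    have "z \<bullet> (A *\<^sub>v z) = (x + (- s) \<cdot>\<^sub>v u) \<bullet> (u + (- s) \<cdot>\<^sub>v (A *\<^sub>v u))"
      by (subst Az) (simp add: z_def)
    also have "\<dots> = x \<bullet> u + (-s) * (x \<bullet> (A *\<^sub>v u)) + (-s) * (u \<bullet> u) + s^2 * c"
      using x u Au
      by (simp add: add_scalar_prod_distrib[of _ n] scalar_prod_add_distrib[of _ n]
          c_def power2_eq_square algebra_simps)
    finally have "z \<bullet> (A *\<^sub>v z) = x \<bullet> u + (-s) * (x \<bullet> (A *\<^sub>v u)) + (-s) * (u \<bullet> u) + s^2 * c" .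
    also have "x \<bullet> u = 0" using x0 by (simp add: u_def)
    finally have "z \<bullet> (A *\<^sub>v z) = -2 * s * a + s^2 * c" using xu by (simp add: a_def algebra_simps)
    then show ?thesis using psd[OF z] by simp
  qed
  have "a = 0"
  proof (rule ccontr)
    assume "a \<noteq> 0"
    then have ap: "a > 0" using a0 by simp
    have "- 2 * (a / (c+1)) * a + (a/(c+1))^2 * c \<ge> 0" by (rule key)
    then have "(a/(c+1))^2 * c \<ge> 2 * (a/(c+1)) * a" by simp
    moreover have "(a/(c+1))^2 * c < 2 * (a/(c+1)) * a"
    proof -
      have e1: "(a/(c+1))^2 * c = (a/(c+1)) * (a * (c/(c+1)))" by (simp add: power2_eq_square)
      have q: "c/(c+1) < 2" using c0 by (simp add: divide_simps)
      have e2: "a * (c/(c+1)) < a * 2" using ap q by (intro mult_strict_left_mono) auto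
      have "(a/(c+1)) * (a * (c/(c+1))) < (a/(c+1)) * (a*2)"
        using mult_strict_left_mono[OF e2, of "a/(c+1)"] ap c0 by simp
      then show ?thesis using e1 by (simp add: algebra_simps)
    qed
    ultimately show False by simp
  qed
  then show ?thesis using self_sp_zero[OF u] by (simp add: a_def u_def)
qed



lemma smult_one_mult_vec:
  fixes y :: "real vec"
  assumes "y \<in> carrier_vec n"
  shows "(m \<cdot>\<^sub>m 1\<^sub>m n) *\<^sub>v y = m \<cdot>\<^sub>v y"
proof (rule eq_vecI)
  fix i assume i: "i < dim_vec (m \<cdot>\<^sub>v y)"
  then have i': "i < n" using assms by simp
  have "((m \<cdot>\<^sub>m 1\<^sub>m n) *\<^sub>v y) $ i = (\<Sum>j\<in>{0..<n}. (if i = j then m else 0) * y $ j)"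
    using i' assms by (auto simp: mult_mat_vec_def scalar_prod_def row_def intro!: sum.cong)
  also have "\<dots> = (\<Sum>j\<in>{0..<n}. if i = j then m * y $ j else 0)" by (rule sum.cong) auto
  also have "\<dots> = m * y $ i" using i' by simp
  finally show "((m \<cdot>\<^sub>m 1\<^sub>m n) *\<^sub>v y) $ i = (m \<cdot>\<^sub>v y) $ i" using i' assms by simp
qed (use assms in simp)

lemma coord_cont: "continuous_on S (\<lambda>x::nat\<Rightarrow>real. x i)"
  by (rule continuous_on_subset[OF continuous_on_product_coordinates]) auto

lemma compact_box:
  "compact (Pi UNIV (\<lambda>i. if i < (n::nat) then {-1..1::real} else {0}))"
proof -
  have "compactin (product_topology (\<lambda>i. euclideanreal) UNIV)
          (PiE UNIV (\<lambda>i. if i < n then {-1..1::real} else {0}))"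
    by (subst compactin_PiE) auto
  then show ?thesis by (simp add: euclidean_product_topology PiE_UNIV_domain)
qed

lemma rayleigh_min:
  fixes A :: "real mat"
  assumes A: "A \<in> carrier_mat n n" and sym: "transpose_mat A = A" and n: "n > 0"
  shows "\<exists>m. (\<forall>y\<in>carrier_vec n. y \<bullet> (A *\<^sub>v y) \<ge> m * (y \<bullet> y)) \<and> eigenvalue A m"
proof -
  define Q where "Q = (\<lambda>x::nat\<Rightarrow>real. \<Sum>i<n. \<Sum>j<n. x i * A $$ (i,j) * x j)"
  define C where "C = Pi UNIV (\<lambda>i. if i < n then {-1..1::real} else {0})"
  define T where "T = C \<inter> {x. (\<Sum>i<n. (x i)^2) = 1}"
  have cC: "compact C" unfolding C_def by (rule compact_box)
  have cl: "closed {x::nat\<Rightarrow>real. (\<Sum>i<n. (x i)^2) = 1}"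
    by (intro closed_Collect_eq continuous_intros coord_cont)
  have cT: "compact T" unfolding T_def using cC cl by (rule compact_Int_closed)
  have e0: "(\<lambda>i. if i = 0 then 1 else 0 :: real) \<in> T"
  proof -
    have "(\<Sum>i<n. (if i = 0 then 1 else 0 :: real)^2) = (\<Sum>i<n. if i = 0 then 1 else 0)"
      by (rule sum.cong) auto
    also have "\<dots> = 1" using n by simp
    finally show ?thesis using n by (auto simp: T_def C_def)
  qed
  have cQ: "continuous_on T Q" unfolding Q_def
    by (intro continuous_intros coord_cont)
  obtain x where xT: "x \<in> T" and xmin: "\<And>z. z \<in> T \<Longrightarrow> Q x \<le> Q z"
    using continuous_attains_inf[OF cT _ cQ] e0 by blast
  define m where "m = Q x"
  define v where "v = vec n x"
  have v: "v \<in> carrier_vec n" by (simp add: v_def)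
  have vv: "v \<bullet> v = 1" using xT
    by (simp add: v_def T_def scalar_prod_def atLeast0LessThan power2_eq_square)
  have vAv: "v \<bullet> (A *\<^sub>v v) = m"
    using qf_expand[OF A v v] by (simp add: m_def Q_def v_def)
  have lb: "y \<bullet> (A *\<^sub>v y) \<ge> m * (y \<bullet> y)" if y: "y \<in> carrier_vec n" for y
  proof (cases "y \<bullet> y = 0")
    case True
    then have "y = 0\<^sub>v n" using self_sp_zero y by blast
    then show ?thesis using A by simp
  next
    case False
    then have yy: "y \<bullet> y > 0" using self_sp_nonneg[of y] by simp
    define s where "s = sqrt (y \<bullet> y)"
    have s: "s > 0" using yy by (simp add: s_def)
    have s2: "s^2 = y \<bullet> y" using yy by (simp add: s_def)
    define z where "z = (\<lambda>i. if i < n then y $ i / s else 0)"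
    have sumsq: "(\<Sum>i<n. (y $ i)^2) = s^2"
      using s2 y by (simp add: scalar_prod_def atLeast0LessThan power2_eq_square)
    have zT: "z \<in> T"
    proof -
      have "\<bar>y $ i / s\<bar> \<le> 1" if "i < n" for i
      proof -
        have "(y $ i)^2 \<le> (\<Sum>i<n. (y $ i)^2)"
          using that by (intro member_le_sum) auto
        then have "(y $ i)^2 \<le> s^2" using sumsq by simp
        then have "\<bar>y $ i\<bar> \<le> s" using s power2_le_imp_le[of "\<bar>y $ i\<bar>" s] by simp
        then show ?thesis using s by (simp add: divide_simps)
      qed
      then have "z \<in> C" unfolding z_def C_def by (auto simp del: abs_divide simp: abs_le_iff)
      moreover have "(\<Sum>i<n. (z i)^2) = 1"
      proof -
        have "(\<Sum>i<n. (z i)^2) = (\<Sum>i<n. (y $ i)^2) / s^2"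
          by (simp add: z_def power_divide sum_divide_distrib)
        then show ?thesis using sumsq s by simp
      qed
      ultimately show ?thesis by (simp add: T_def)
    qed
    have "Q z = (y \<bullet> (A *\<^sub>v y)) / s^2"
      using qf_expand[OF A y y] by (simp add: Q_def z_def sum_divide_distrib power2_eq_square)
    with xmin[OF zT] have "m \<le> (y \<bullet> (A *\<^sub>v y)) / s^2" by (simp add: m_def)
    then show ?thesis using s s2 yy by (simp add: divide_simps mult.commute)
  qed
  define B where "B = A - m \<cdot>\<^sub>m 1\<^sub>m n"
  have B: "B \<in> carrier_mat n n" unfolding B_def by (rule minus_carrier_mat) simp
  have Bv: "B *\<^sub>v y = A *\<^sub>v y - m \<cdot>\<^sub>v y" if "y \<in> carrier_vec n" for y
    using that A unfolding B_def
    by (simp add: minus_mult_distrib_mat_vec[of _ n n] smult_one_mult_vec)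
  have Bsym: "transpose_mat B = B"
    unfolding B_def using A sym by (subst transpose_minus[of _ n n]) (auto intro!: eq_matI)
  have Bq: "y \<bullet> (B *\<^sub>v y) = y \<bullet> (A *\<^sub>v y) - m * (y \<bullet> y)" if y: "y \<in> carrier_vec n" for y
    using y A by (simp add: Bv scalar_prod_minus_distrib[of _ n])
  have "B *\<^sub>v v = 0\<^sub>v n"
    by (rule psd_kernel[OF B Bsym _ v]) (use Bq lb vAv vv v in auto)
  then have "A *\<^sub>v v - m \<cdot>\<^sub>v v = 0\<^sub>v n" using Bv[OF v] by simp
  then have Av: "A *\<^sub>v v = m \<cdot>\<^sub>v v"
  proof -
    assume h: "A *\<^sub>v v - m \<cdot>\<^sub>v v = 0\<^sub>v n"
    show ?thesis
    proof (rule eq_vecI)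
      fix i assume "i < dim_vec (m \<cdot>\<^sub>v v)"
      then have i: "i < n" using v by simp
      have "(A *\<^sub>v v - m \<cdot>\<^sub>v v) $ i = 0" using h i by simp
      then show "(A *\<^sub>v v) $ i = (m \<cdot>\<^sub>v v) $ i" using i A v by simp
    qed (use A v in simp)
  qed
  have v0: "v \<noteq> 0\<^sub>v n" using vv by auto
  have "eigenvalue A m" unfolding eigenvalue_def eigenvector_def
    using v v0 Av A by auto
  then show ?thesis using lb by blast
qed



lemma eig_finite:
  fixes A :: "real mat"
  assumes A: "A \<in> carrier_mat n n"
  shows "finite {k. eigenvalue A k}"
proof -
  have "char_poly A \<noteq> 0" using degree_monic_char_poly[OF A] by auto
  then have "finite {k. poly (char_poly A) k = 0}" by (rule poly_roots_finite)
  then show ?thesis using eigenvalue_root_char_poly[OF A] by simp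
qed

lemma eig_quad:
  fixes A :: "real mat"
  assumes A: "A \<in> carrier_mat n n" and ev: "eigenvalue A k"
  obtains v where "v \<in> carrier_vec n" "v \<bullet> v > 0" "v \<bullet> (A *\<^sub>v v) = k * (v \<bullet> v)"
proof -
  obtain v where v: "v \<in> carrier_vec n" "v \<noteq> 0\<^sub>v n" "A *\<^sub>v v = k \<cdot>\<^sub>v v"
    using ev A unfolding eigenvalue_def eigenvector_def by auto
  have "v \<bullet> v \<noteq> 0" using self_sp_zero[OF v(1)] v(2) by blast
  then have "v \<bullet> v > 0" using self_sp_nonneg[of v] by simp
  moreover have "v \<bullet> (A *\<^sub>v v) = k * (v \<bullet> v)" using v by simp
  ultimately show ?thesis using that v(1) by blast
qed

lemma neg_sym:
  fixes A :: "real mat"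
  assumes A: "A \<in> carrier_mat n n" and sym: "transpose_mat A = A"
  shows "- A \<in> carrier_mat n n" "transpose_mat (- A) = - A"
    "\<And>y. y \<in> carrier_vec n \<Longrightarrow> y \<bullet> ((- A) *\<^sub>v y) = - (y \<bullet> (A *\<^sub>v y))"
    "\<And>k. eigenvalue (- A) k \<Longrightarrow> eigenvalue A (- k)"
proof -
  show "- A \<in> carrier_mat n n" using A by simp
  show "transpose_mat (- A) = - A" using sym A by (metis transpose_uminus)
  fix y :: "real vec" assume y: "y \<in> carrier_vec n"
  then show "y \<bullet> ((- A) *\<^sub>v y) = - (y \<bullet> (A *\<^sub>v y))" using A
    by (simp add: scalar_prod_uminus_right)
next
  fix k assume "eigenvalue (- A) k"
  then obtain v where v: "v \<in> carrier_vec n" "v \<noteq> 0\<^sub>v n" "(- A) *\<^sub>v v = k \<cdot>\<^sub>v v"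
    using A unfolding eigenvalue_def eigenvector_def by auto
  have "A *\<^sub>v v = (- k) \<cdot>\<^sub>v v"
  proof -
    have "- (A *\<^sub>v v) = k \<cdot>\<^sub>v v" using v A by simp
    then have "- (- (A *\<^sub>v v)) = - (k \<cdot>\<^sub>v v)" by simp
    then show ?thesis by (auto intro!: eq_vecI)
  qed
  then show "eigenvalue A (- k)" unfolding eigenvalue_def eigenvector_def
    using v A by auto
qed

lemma spectral_bounds:
  fixes A :: "real mat"
  assumes A: "A \<in> carrier_mat n n" and sym: "transpose_mat A = A" and n: "n > 0"
  shows "\<And>y. y \<in> carrier_vec n \<Longrightarrow> lambda_min A * (y \<bullet> y) \<le> y \<bullet> (A *\<^sub>v y)"
    "\<And>y. y \<in> carrier_vec n \<Longrightarrow> y \<bullet> (A *\<^sub>v y) \<le> lambda_max A * (y \<bullet> y)"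
    "lambda_min A \<le> lambda_max A"
proof -
  obtain m where m: "\<And>y. y \<in> carrier_vec n \<Longrightarrow> y \<bullet> (A *\<^sub>v y) \<ge> m * (y \<bullet> y)"
    and em: "eigenvalue A m" using rayleigh_min[OF A sym n] by blast
  note NA = neg_sym[OF A sym]
  obtain m' where m': "\<And>y. y \<in> carrier_vec n \<Longrightarrow> y \<bullet> ((- A) *\<^sub>v y) \<ge> m' * (y \<bullet> y)"
    and em': "eigenvalue (- A) m'" using rayleigh_min[OF NA(1) NA(2) n] by blast
  define M where "M = - m'"
  have eM: "eigenvalue A M" using NA(4)[OF em'] by (simp add: M_def)
  have M: "y \<bullet> (A *\<^sub>v y) \<le> M * (y \<bullet> y)" if "y \<in> carrier_vec n" for y
    using m'[OF that] NA(3)[OF that] by (simp add: M_def)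
  have fin: "finite {k. eigenvalue A k}" by (rule eig_finite[OF A])
  have ge: "m \<le> k" if ek: "eigenvalue A k" for k
  proof -
    obtain v where v: "v \<in> carrier_vec n" "v \<bullet> v > 0" "v \<bullet> (A *\<^sub>v v) = k * (v \<bullet> v)"
      using eig_quad[OF A ek] by blast
    then show ?thesis using m[OF v(1)] by simp
  qed
  have le: "k \<le> M" if ek: "eigenvalue A k" for k
  proof -
    obtain v where v: "v \<in> carrier_vec n" "v \<bullet> v > 0" "v \<bullet> (A *\<^sub>v v) = k * (v \<bullet> v)"
      using eig_quad[OF A ek] by blast
    then show ?thesis using M[OF v(1)] by simp
  qed
  have lmin: "lambda_min A = m" unfolding lambda_min_def
    by (rule Min_eqI) (use fin em ge in auto)
  have lmax: "lambda_max A = M" unfolding lambda_max_def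
    by (rule Max_eqI) (use fin eM le in auto)
  show "\<And>y. y \<in> carrier_vec n \<Longrightarrow> lambda_min A * (y \<bullet> y) \<le> y \<bullet> (A *\<^sub>v y)"
    using m lmin by simp
  show "\<And>y. y \<in> carrier_vec n \<Longrightarrow> y \<bullet> (A *\<^sub>v y) \<le> lambda_max A * (y \<bullet> y)"
    using M lmax by simp
  show "lambda_min A \<le> lambda_max A" using ge[OF eM] lmin lmax by simp
qed



lemma quad_expand:
  fixes B :: "real mat"
  assumes B: "B \<in> carrier_mat n n" and sym: "transpose_mat B = B"
    and x: "x \<in> carrier_vec n" and u: "u \<in> carrier_vec n"
  shows "(x + t \<cdot>\<^sub>v u) \<bullet> (B *\<^sub>v (x + t \<cdot>\<^sub>v u)) =
         x \<bullet> (B *\<^sub>v x) + 2 * t * (u \<bullet> (B *\<^sub>v x)) + t^2 * (u \<bullet> (B *\<^sub>v u))"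
proof -
  have Bx: "B *\<^sub>v x \<in> carrier_vec n" and Bu: "B *\<^sub>v u \<in> carrier_vec n" using B x u by auto
  have "B *\<^sub>v (x + t \<cdot>\<^sub>v u) = B *\<^sub>v x + t \<cdot>\<^sub>v (B *\<^sub>v u)"
    using B x u by (simp add: mult_add_distrib_mat_vec mult_mat_vec)
  then have "(x + t \<cdot>\<^sub>v u) \<bullet> (B *\<^sub>v (x + t \<cdot>\<^sub>v u)) =
      (x + t \<cdot>\<^sub>v u) \<bullet> (B *\<^sub>v x + t \<cdot>\<^sub>v (B *\<^sub>v u))" by simp
  also have "\<dots> = x \<bullet> (B *\<^sub>v x) + t * (x \<bullet> (B *\<^sub>v u)) + t * (u \<bullet> (B *\<^sub>v x)) + t^2 * (u \<bullet> (B *\<^sub>v u))"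
    using x u Bx Bu
    by (simp add: add_scalar_prod_distrib[of _ n] scalar_prod_add_distrib[of _ n]
          power2_eq_square algebra_simps)
  also have "x \<bullet> (B *\<^sub>v u) = u \<bullet> (B *\<^sub>v x)" by (rule qf_sym[OF B sym x u])
  finally show ?thesis by (simp add: algebra_simps)
qed

lemma sp_expand:
  fixes x u :: "real vec"
  assumes x: "x \<in> carrier_vec n" and u: "u \<in> carrier_vec n"
  shows "(x + t \<cdot>\<^sub>v u) \<bullet> (x + t \<cdot>\<^sub>v u) = x \<bullet> x + 2 * t * (u \<bullet> x) + t^2 * (u \<bullet> u)"
  using quad_expand[of "1\<^sub>m n" n x u t] x u by simp

lemma qf_norm_bound:
  fixes B :: "real mat"
  assumes B: "B \<in> carrier_mat n n" and sym: "transpose_mat B = B" and q: "q \<ge> 0"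
    and bnd: "\<And>y. y \<in> carrier_vec n \<Longrightarrow> \<bar>y \<bullet> (B *\<^sub>v y)\<bar> \<le> q * (y \<bullet> y)"
    and x: "x \<in> carrier_vec n"
  shows "(B *\<^sub>v x) \<bullet> (B *\<^sub>v x) \<le> q^2 * (x \<bullet> x)"
proof -
  define u where "u = B *\<^sub>v x"
  have u: "u \<in> carrier_vec n" using B x by (simp add: u_def)
  define a where "a = u \<bullet> u"
  define b where "b = x \<bullet> x"
  have a0: "a \<ge> 0" and b0: "b \<ge> 0" by (auto simp: a_def b_def self_sp_nonneg)
  have key: "2 * s * a \<le> q * (b + s^2 * a)" for s
  proof -
    have p: "(x + s \<cdot>\<^sub>v u) \<bullet> (B *\<^sub>v (x + s \<cdot>\<^sub>v u)) = x \<bullet> (B *\<^sub>v x) + 2 * s * a + s^2 * (u \<bullet> (B *\<^sub>v u))"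
      using quad_expand[OF B sym x u, of s] by (simp add: a_def u_def)
    have m: "(x + (-s) \<cdot>\<^sub>v u) \<bullet> (B *\<^sub>v (x + (-s) \<cdot>\<^sub>v u)) = x \<bullet> (B *\<^sub>v x) - 2 * s * a + s^2 * (u \<bullet> (B *\<^sub>v u))"
      using quad_expand[OF B sym x u, of "-s"] by (simp add: a_def u_def)
    have z1: "x + s \<cdot>\<^sub>v u \<in> carrier_vec n" and z2: "x + (-s) \<cdot>\<^sub>v u \<in> carrier_vec n" using x u by auto
    have n1: "(x + s \<cdot>\<^sub>v u) \<bullet> (x + s \<cdot>\<^sub>v u) = b + 2 * s * (u \<bullet> x) + s^2 * a"
      using sp_expand[OF x u, of s] by (simp add: a_def b_def)
    have n2: "(x + (-s) \<cdot>\<^sub>v u) \<bullet> (x + (-s) \<cdot>\<^sub>v u) = b - 2 * s * (u \<bullet> x) + s^2 * a"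
      using sp_expand[OF x u, of "-s"] by (simp add: a_def b_def)
    have "4 * s * a = (x + s \<cdot>\<^sub>v u) \<bullet> (B *\<^sub>v (x + s \<cdot>\<^sub>v u)) - (x + (-s) \<cdot>\<^sub>v u) \<bullet> (B *\<^sub>v (x + (-s) \<cdot>\<^sub>v u))"
      using p m by simp
    also have "\<dots> \<le> q * ((x + s \<cdot>\<^sub>v u) \<bullet> (x + s \<cdot>\<^sub>v u)) + q * ((x + (-s) \<cdot>\<^sub>v u) \<bullet> (x + (-s) \<cdot>\<^sub>v u))"
      using bnd[OF z1] bnd[OF z2] by linarith
    also have "\<dots> = q * (2 * b + 2 * s^2 * a)" unfolding n1 n2 by (simp add: algebra_simps)
    finally show ?thesis by (simp add: algebra_simps)
  qed
  show ?thesis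
  proof (cases "q = 0")
    case True
    then have "2 * a \<le> 0" using key[of 1] by simp
    then show ?thesis using a0 True by (simp add: a_def u_def)
  next
    case False
    then have qp: "q > 0" using q by simp
    have "2 * (1/q) * a \<le> q * (b + (1/q)^2 * a)" by (rule key)
    then have "2 * a / q \<le> q * b + a / q" using qp by (simp add: power2_eq_square algebra_simps)
    then have "a / q \<le> q * b" by simp
    then have "a \<le> q * b * q" using qp by (simp add: divide_simps)
    then show ?thesis by (simp add: a_def b_def u_def power2_eq_square algebra_simps)
  qed
qed

lemma qf_lower_norm:
  fixes B :: "real mat"
  assumes B: "B \<in> carrier_mat n n" and m: "m \<ge> 0"
    and lb: "y \<bullet> (B *\<^sub>v y) \<ge> m * (y \<bullet> y)" and y: "y \<in> carrier_vec n"
  shows "(B *\<^sub>v y) \<bullet> (B *\<^sub>v y) \<ge> m^2 * (y \<bullet> y)"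
proof -
  have By: "B *\<^sub>v y \<in> carrier_vec n" using B y by simp
  have "0 \<le> (B *\<^sub>v y + (-m) \<cdot>\<^sub>v y) \<bullet> (B *\<^sub>v y + (-m) \<cdot>\<^sub>v y)" by (rule self_sp_nonneg)
  also have "\<dots> = (B *\<^sub>v y) \<bullet> (B *\<^sub>v y) + 2 * (-m) * (y \<bullet> (B *\<^sub>v y)) + m^2 * (y \<bullet> y)"
    using sp_expand[OF By y, of "-m"] by simp
  finally have "(B *\<^sub>v y) \<bullet> (B *\<^sub>v y) \<ge> 2 * m * (y \<bullet> (B *\<^sub>v y)) - m^2 * (y \<bullet> y)" by simp
  moreover have "2 * m * (y \<bullet> (B *\<^sub>v y)) \<ge> 2 * m * (m * (y \<bullet> y))"
    using lb m by (simp add: mult_left_mono)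
  ultimately show ?thesis by (simp add: power2_eq_square algebra_simps)
qed

lemma vnorm_le_mult:
  assumes "x \<bullet> x \<le> c^2 * (y \<bullet> y)" "c \<ge> 0"
  shows "vnorm x \<le> c * vnorm y"
proof -
  have "sqrt (x \<bullet> x) \<le> sqrt (c^2 * (y \<bullet> y))" using assms(1) by (rule real_sqrt_le_mono)
  then show ?thesis using assms(2) by (simp add: vnorm_alt real_sqrt_mult)
qed

lemma smult_mat_vec:
  fixes A :: "real mat"
  assumes "A \<in> carrier_mat n n" "v \<in> carrier_vec n"
  shows "(c \<cdot>\<^sub>m A) *\<^sub>v v = c \<cdot>\<^sub>v (A *\<^sub>v v)"
  using assms by (intro eq_vecI) (auto simp: mult_mat_vec_def scalar_prod_def sum_distrib_left algebra_simps)



lemma sym_entry: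
  assumes "M \<in> carrier_mat n n" "transpose_mat M = M" "i < n" "j < n"
  shows "M $$ (j, i) = M $$ (i, j)"
proof -
  have "transpose_mat M $$ (i, j) = M $$ (j, i)" using assms(1,3,4) by simp
  then show ?thesis using assms(2) by metis
qed

lemma gd_dim:
  assumes M: "M \<in> carrier_mat n n" and b: "b \<in> carrier_vec n"
  shows "gd_iter M b eta k \<in> carrier_vec n"
  by (induction k) (use M b in auto)

lemma gd_conv:
  fixes M :: "real mat"
  assumes M: "M \<in> carrier_mat n n" and sym: "transpose_mat M = M" and n: "n > 0"
    and b: "b \<in> carrier_vec n" and yb: "yb \<in> carrier_vec n" and Myb: "M *\<^sub>v yb = b"
    and mpos: "lambda_min M > 0"
  shows "vnorm (gd_iter M b (1 / lambda_max M) K + yb)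
           \<le> (1 - lambda_min M / lambda_max M)^K * vnorm yb"
proof -
  define m where "m = lambda_min M"
  define L where "L = lambda_max M"
  define eta where "eta = 1 / L"
  define q where "q = 1 - m / L"
  note sb = spectral_bounds[OF M sym n]
  have mL: "m \<le> L" using sb(3) by (simp add: m_def L_def)
  have m0: "m > 0" using mpos by (simp add: m_def)
  have L0: "L > 0" using mL m0 by simp
  have q0: "q \<ge> 0" and q1: "q \<le> 1" using mL m0 L0 by (auto simp: q_def divide_simps)
  define P where "P = 1\<^sub>m n - eta \<cdot>\<^sub>m M"
  have P: "P \<in> carrier_mat n n" unfolding P_def by (rule minus_carrier_mat) (use M in simp)
  have Pv: "P *\<^sub>v y = y - eta \<cdot>\<^sub>v (M *\<^sub>v y)" if y: "y \<in> carrier_vec n" for y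
    unfolding P_def using y M
    by (subst minus_mult_distrib_mat_vec[of _ n n]) (auto simp: smult_mat_vec)
  have Psym: "transpose_mat P = P"
    unfolding P_def using M sym by (subst transpose_minus[of _ n n]) (auto intro!: eq_matI simp: sym_entry[OF M sym])
  have Pq: "\<bar>y \<bullet> (P *\<^sub>v y)\<bar> \<le> q * (y \<bullet> y)" if y: "y \<in> carrier_vec n" for y
  proof -
    have My: "M *\<^sub>v y \<in> carrier_vec n" using M y by simp
    have e: "y \<bullet> (P *\<^sub>v y) = y \<bullet> y - eta * (y \<bullet> (M *\<^sub>v y))"
      using y My by (simp add: Pv scalar_prod_minus_distrib[of _ n])
    have lo: "m * (y \<bullet> y) \<le> y \<bullet> (M *\<^sub>v y)" using sb(1)[OF y] by (simp add: m_def)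
    have hi: "y \<bullet> (M *\<^sub>v y) \<le> L * (y \<bullet> y)" using sb(2)[OF y] by (simp add: L_def)
    have yy: "y \<bullet> y \<ge> 0" by (rule self_sp_nonneg)
    have "eta * (y \<bullet> (M *\<^sub>v y)) \<le> y \<bullet> y"
      using mult_left_mono[OF hi, of eta] L0 by (simp add: eta_def)
    moreover have "eta * (m * (y \<bullet> y)) \<le> eta * (y \<bullet> (M *\<^sub>v y))"
      using mult_left_mono[OF lo, of eta] L0 by (simp add: eta_def)
    ultimately show ?thesis using e yy L0
      by (simp add: q_def eta_def algebra_simps abs_le_iff divide_simps)
  qed
  show ?thesis
  proof (induction K)
    case 0
    then show ?case using yb b by simp
  next
    case (Suc K)
    define e where "e = gd_iter M b (1 / lambda_max M) K + yb"
    have s: "gd_iter M b (1 / lambda_max M) K \<in> carrier_vec n" by (rule gd_dim[OF M b])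
    have e: "e \<in> carrier_vec n" using s yb by (simp add: e_def)
    have step: "gd_iter M b (1 / lambda_max M) (Suc K) + yb = P *\<^sub>v e"
    proof -
      have "M *\<^sub>v e = M *\<^sub>v gd_iter M b (1 / lambda_max M) K + b"
        unfolding e_def using M s yb Myb by (simp add: mult_add_distrib_mat_vec)
      then show ?thesis using s yb M b e
        by (simp add: Pv e_def eta_def L_def) (auto intro!: eq_vecI)
    qed
    have "(P *\<^sub>v e) \<bullet> (P *\<^sub>v e) \<le> q^2 * (e \<bullet> e)"
      by (rule qf_norm_bound[OF P Psym q0 Pq e])
    then have "vnorm (P *\<^sub>v e) \<le> q * vnorm e" using q0 by (rule vnorm_le_mult)
    also have "\<dots> \<le> q * ((1 - lambda_min M / lambda_max M)^K * vnorm yb)"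
      using Suc.IH q0 by (simp add: e_def mult_left_mono)
    finally show ?case using step by (simp add: q_def m_def L_def)
  qed
qed



lemma sum_split:
  fixes N d :: nat and g :: "nat \<Rightarrow> 'a::comm_monoid_add"
  shows "(\<Sum>q<N*d. g q) = (\<Sum>j<N. \<Sum>b<d. g (j*d+b))"
proof (induction N)
  case 0
  then show ?case by simp
next
  case (Suc N)
  have U: "{..<Suc N * d} = {..<N*d} \<union> {N*d..<N*d+d}" by auto
  have "(\<Sum>q\<in>{N*d..<N*d+d}. g q) = (\<Sum>b<d. g (N*d+b))"
  proof -
    have "(\<Sum>q\<in>{N*d..<N*d+d}. g q) = (\<Sum>q\<in>{0+N*d..<d+N*d}. g q)" by (simp add: add.commute)
    also have "\<dots> = (\<Sum>b\<in>{0..<d}. g (b + N*d))" by (rule sum.shift_bounds_nat_ivl)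
    finally show ?thesis by (simp add: atLeast0LessThan add.commute)
  qed
  then have "(\<Sum>q<Suc N*d. g q) = (\<Sum>q<N*d. g q) + (\<Sum>b<d. g (N*d+b))"
    unfolding U by (subst sum.union_disjoint) auto
  then show ?case using Suc by simp
qed

lemma dm_div: "b < (d::nat) \<Longrightarrow> (j*d+b) div d = j" by simp
lemma dm_mod: "b < (d::nat) \<Longrightarrow> (j*d+b) mod d = b" by simp
lemma dm_lt: "j < N \<Longrightarrow> b < (d::nat) \<Longrightarrow> j*d+b < N*d"
proof -
  assume "j < N" "b < d"
  then have "j*d + b < j*d + d" by simp
  also have "\<dots> = (Suc j)*d" by simp
  also have "\<dots> \<le> N*d" using \<open>j < N\<close> by (intro mult_right_mono) auto
  finally show ?thesis .
qed

lemma kron_carrier: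
  assumes "G \<in> carrier_mat N N" "S \<in> carrier_mat d d"
  shows "kron G S \<in> carrier_mat (N*d) (N*d)"
  using assms by (simp add: kron_def)

lemma kron_index:
  assumes G: "G \<in> carrier_mat N N" and S: "S \<in> carrier_mat d d" and p: "p < N*d" and q: "q < N*d"
  shows "kron G S $$ (p,q) = G $$ (p div d, q div d) * S $$ (p mod d, q mod d)"
  using assms by (simp add: kron_def)

lemma kron_mult_vec_index:
  fixes G S :: "real mat"
  assumes G: "G \<in> carrier_mat N N" and S: "S \<in> carrier_mat d d"
    and x: "x \<in> carrier_vec (N*d)" and p: "p < N*d"
  shows "(kron G S *\<^sub>v x) $ p = (\<Sum>j<N. \<Sum>b<d. G $$ (p div d, j) * S $$ (p mod d, b) * x $ (j*d+b))"
proof -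
  have "(kron G S *\<^sub>v x) $ p = (\<Sum>q<N*d. kron G S $$ (p,q) * x $ q)"
    using G S x p by (simp add: kron_def mult_mat_vec_def scalar_prod_def atLeast0LessThan)
  also have "\<dots> = (\<Sum>q<N*d. G $$ (p div d, q div d) * S $$ (p mod d, q mod d) * x $ q)"
    using G S p by (intro sum.cong) (auto simp: kron_index)
  also have "\<dots> = (\<Sum>j<N. \<Sum>b<d. G $$ (p div d, (j*d+b) div d) * S $$ (p mod d, (j*d+b) mod d) * x $ (j*d+b))"
    by (rule sum_split)
  also have "\<dots> = (\<Sum>j<N. \<Sum>b<d. G $$ (p div d, j) * S $$ (p mod d, b) * x $ (j*d+b))"
    by (intro sum.cong refl) (simp add: dm_div dm_mod)
  finally show ?thesis .
qed

lemma kron_mult_vec_index2: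
  fixes G S :: "real mat"
  assumes G: "G \<in> carrier_mat N N" and S: "S \<in> carrier_mat d d"
    and x: "x \<in> carrier_vec (N*d)" and i: "i < N" and a: "a < d"
  shows "(kron G S *\<^sub>v x) $ (i*d+a) = (\<Sum>j<N. \<Sum>b<d. G $$ (i, j) * S $$ (a, b) * x $ (j*d+b))"
  using kron_mult_vec_index[OF G S x dm_lt[OF i a]] a by (simp add: dm_div dm_mod)

lemma sp_split:
  fixes x y :: "real vec"
  assumes "x \<in> carrier_vec (N*d)" "y \<in> carrier_vec (N*d)"
  shows "x \<bullet> y = (\<Sum>i<N. \<Sum>a<d. x $ (i*d+a) * y $ (i*d+a))"
  using assms by (simp add: scalar_prod_def atLeast0LessThan sum_split[of _ N d])

lemma kron_qf:
  fixes G S :: "real mat"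
  assumes G: "G \<in> carrier_mat N N" and S: "S \<in> carrier_mat d d" and x: "x \<in> carrier_vec (N*d)"
  shows "x \<bullet> (kron G S *\<^sub>v x) =
    (\<Sum>i<N. \<Sum>a<d. x $ (i*d+a) * (\<Sum>j<N. \<Sum>b<d. G $$ (i, j) * S $$ (a, b) * x $ (j*d+b)))"
proof -
  have K: "kron G S *\<^sub>v x \<in> carrier_vec (N*d)" using kron_carrier[OF G S] x by simp
  show ?thesis using sp_split[OF x K] kron_mult_vec_index2[OF G S x] by simp
qed



definition colv :: "nat \<Rightarrow> nat \<Rightarrow> real vec \<Rightarrow> nat \<Rightarrow> real vec" where
  "colv N d x a = vec N (\<lambda>i. x $ (i*d+a))"
definition rowv :: "nat \<Rightarrow> nat \<Rightarrow> real vec \<Rightarrow> nat \<Rightarrow> real vec" where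
  "rowv N d x i = vec d (\<lambda>a. x $ (i*d+a))"

lemma colv_carrier[simp]: "colv N d x a \<in> carrier_vec N" by (simp add: colv_def)
lemma rowv_carrier[simp]: "rowv N d x i \<in> carrier_vec d" by (simp add: rowv_def)

lemma one_inner_sum:
  fixes f :: "nat \<Rightarrow> real"
  assumes "a < d"
  shows "(\<Sum>b<d. c * (1\<^sub>m d :: real mat) $$ (a, b) * f b) = c * f a"
proof -
  have "(\<Sum>b<d. c * (1\<^sub>m d :: real mat) $$ (a, b) * f b) = (\<Sum>b<d. if a = b then c * f b else 0)"
    using assms by (intro sum.cong refl) auto
  then show ?thesis using assms by simp
qed

lemma if_inner_sum:
  fixes f :: "nat \<Rightarrow> real"
  assumes "a < d"
  shows "(\<Sum>b<d. c * (if a = b then 1 else 0) * f b) = c * f a"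
proof -
  have "(\<Sum>b<d. c * (if a = b then 1 else 0) * f b) = (\<Sum>b<d. if a = b then c * f b else 0)"
    by (rule sum.cong) auto
  then show ?thesis using assms by simp
qed

lemma if_inner_sum2:
  fixes g :: "nat \<Rightarrow> real"
  assumes "i < N"
  shows "(\<Sum>j<N. (if i = j then 1 else 0) * g j) = g i"
proof -
  have "(\<Sum>j<N. (if i = j then 1 else 0) * g j) = (\<Sum>j<N. if i = j then g j else 0)"
    by (rule sum.cong) auto
  then show ?thesis using assms by simp
qed

lemma one_inner_sum2:
  fixes g :: "nat \<Rightarrow> real"
  assumes "i < N"
  shows "(\<Sum>j<N. (1\<^sub>m N :: real mat) $$ (i, j) * g j) = g i"
proof -
  have "(\<Sum>j<N. (1\<^sub>m N :: real mat) $$ (i, j) * g j) = (\<Sum>j<N. if i = j then g j else 0)"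
    using assms by (intro sum.cong refl) auto
  then show ?thesis using assms by simp
qed

lemma sp_colv:
  fixes x :: "real vec"
  assumes x: "x \<in> carrier_vec (N*d)"
  shows "x \<bullet> x = (\<Sum>a<d. colv N d x a \<bullet> colv N d x a)"
proof -
  have "x \<bullet> x = (\<Sum>i<N. \<Sum>a<d. x $ (i*d+a) * x $ (i*d+a))" by (rule sp_split[OF x x])
  also have "\<dots> = (\<Sum>a<d. \<Sum>i<N. x $ (i*d+a) * x $ (i*d+a))" by (rule sum.swap)
  also have "\<dots> = (\<Sum>a<d. colv N d x a \<bullet> colv N d x a)"
    by (intro sum.cong refl) (simp add: colv_def scalar_prod_def atLeast0LessThan)
  finally show ?thesis .
qed

lemma kron_G1_qf:
  fixes G :: "real mat"
  assumes G: "G \<in> carrier_mat N N" and x: "x \<in> carrier_vec (N*d)"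
  shows "x \<bullet> (kron G (1\<^sub>m d) *\<^sub>v x) = (\<Sum>a<d. colv N d x a \<bullet> (G *\<^sub>v colv N d x a))"
proof -
  have "x \<bullet> (kron G (1\<^sub>m d) *\<^sub>v x) =
    (\<Sum>i<N. \<Sum>a<d. x $ (i*d+a) * (\<Sum>j<N. \<Sum>b<d. G $$ (i, j) * (1\<^sub>m d) $$ (a, b) * x $ (j*d+b)))"
    by (rule kron_qf[OF G _ x]) simp
  also have "\<dots> = (\<Sum>i<N. \<Sum>a<d. x $ (i*d+a) * (\<Sum>j<N. G $$ (i, j) * x $ (j*d+a)))"
    by (intro sum.cong refl) (simp add: if_inner_sum)
  also have "\<dots> = (\<Sum>a<d. \<Sum>i<N. \<Sum>j<N. x $ (i*d+a) * G $$ (i, j) * x $ (j*d+a))"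
    by (subst sum.swap) (simp add: sum_distrib_left mult.assoc)
  also have "\<dots> = (\<Sum>a<d. colv N d x a \<bullet> (G *\<^sub>v colv N d x a))"
    by (intro sum.cong refl) (simp add: qf_expand[OF G] colv_def)
  finally show ?thesis .
qed

lemma kron_1S_qf:
  fixes S :: "real mat"
  assumes S: "S \<in> carrier_mat d d" and x: "x \<in> carrier_vec (N*d)"
  shows "x \<bullet> (kron (1\<^sub>m N) S *\<^sub>v x) = (\<Sum>i<N. rowv N d x i \<bullet> (S *\<^sub>v rowv N d x i))"
proof -
  have "x \<bullet> (kron (1\<^sub>m N) S *\<^sub>v x) =
    (\<Sum>i<N. \<Sum>a<d. x $ (i*d+a) * (\<Sum>j<N. \<Sum>b<d. (1\<^sub>m N) $$ (i, j) * S $$ (a, b) * x $ (j*d+b)))"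
    by (rule kron_qf[OF _ S x]) simp
  also have "\<dots> = (\<Sum>i<N. \<Sum>a<d. x $ (i*d+a) * (\<Sum>b<d. S $$ (a, b) * x $ (i*d+b)))"
  proof (intro sum.cong refl)
    fix i a assume i: "i \<in> {..<N}" and a: "a \<in> {..<d}"
    have "(\<Sum>j<N. \<Sum>b<d. (1\<^sub>m N :: real mat) $$ (i, j) * S $$ (a, b) * x $ (j*d+b))
        = (\<Sum>j<N. (1\<^sub>m N :: real mat) $$ (i, j) * (\<Sum>b<d. S $$ (a, b) * x $ (j*d+b)))"
      by (simp add: sum_distrib_left mult.assoc)
    also have "\<dots> = (\<Sum>b<d. S $$ (a, b) * x $ (i*d+b))"
      using i by (simp add: if_inner_sum2)
    finally show "x $ (i*d+a) * (\<Sum>j<N. \<Sum>b<d. (1\<^sub>m N) $$ (i, j) * S $$ (a, b) * x $ (j*d+b)) =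
        x $ (i*d+a) * (\<Sum>b<d. S $$ (a, b) * x $ (i*d+b))" by simp
  qed
  also have "\<dots> = (\<Sum>i<N. rowv N d x i \<bullet> (S *\<^sub>v rowv N d x i))"
    by (intro sum.cong refl) (simp add: qf_expand[OF S] rowv_def sum_distrib_left mult.assoc)
  finally show ?thesis .
qed

lemma kron_G1_lb:
  fixes G :: "real mat"
  assumes G: "G \<in> carrier_mat N N" and lb: "\<And>v. v \<in> carrier_vec N \<Longrightarrow> v \<bullet> (G *\<^sub>v v) \<ge> mu * (v \<bullet> v)"
    and x: "x \<in> carrier_vec (N*d)"
  shows "x \<bullet> (kron G (1\<^sub>m d) *\<^sub>v x) \<ge> mu * (x \<bullet> x)"
proof -
  have "mu * (x \<bullet> x) = (\<Sum>a<d. mu * (colv N d x a \<bullet> colv N d x a))"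
    by (simp add: sp_colv[OF x] sum_distrib_left)
  also have "\<dots> \<le> (\<Sum>a<d. colv N d x a \<bullet> (G *\<^sub>v colv N d x a))"
    by (intro sum_mono lb) simp
  finally show ?thesis using kron_G1_qf[OF G x] by simp
qed

lemma kron_1S_psd:
  fixes S :: "real mat"
  assumes S: "S \<in> carrier_mat d d" and psd: "\<And>v. v \<in> carrier_vec d \<Longrightarrow> v \<bullet> (S *\<^sub>v v) \<ge> 0"
    and x: "x \<in> carrier_vec (N*d)"
  shows "x \<bullet> (kron (1\<^sub>m N) S *\<^sub>v x) \<ge> 0"
  unfolding kron_1S_qf[OF S x] by (intro sum_nonneg psd) simp



lemma p_decomp:
  assumes "p < N * (d::nat)"
  shows "p div d < N" "p mod d < d" "p = (p div d) * d + p mod d"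
proof -
  have d: "d > 0" using assms by (cases d) auto
  show "p div d < N" using assms by (simp add: less_mult_imp_div_less)
  show "p mod d < d" using d by simp
  show "p = (p div d) * d + p mod d" by simp
qed

lemma kron_mixed:
  fixes G S :: "real mat"
  assumes G: "G \<in> carrier_mat N N" and S: "S \<in> carrier_mat d d" and x: "x \<in> carrier_vec (N*d)"
  shows "kron G (1\<^sub>m d) *\<^sub>v (kron (1\<^sub>m N) S *\<^sub>v x) = kron G S *\<^sub>v x"
proof (rule eq_vecI)
  have K1: "kron (1\<^sub>m N) S *\<^sub>v x \<in> carrier_vec (N*d)" using kron_carrier[OF _ S, of "1\<^sub>m N" N] x by simp
  show "dim_vec (kron G (1\<^sub>m d) *\<^sub>v (kron (1\<^sub>m N) S *\<^sub>v x)) = dim_vec (kron G S *\<^sub>v x)"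
    using G S by (simp add: kron_def)
  fix p assume "p < dim_vec (kron G S *\<^sub>v x)"
  then have p: "p < N*d" using G S by (simp add: kron_def)
  note pd = p_decomp[OF p]
  define i where "i = p div d"
  define a where "a = p mod d"
  have i: "i < N" and a: "a < d" using pd by (auto simp: i_def a_def)
  have inner: "(kron (1\<^sub>m N) S *\<^sub>v x) $ (j*d+a) = (\<Sum>c<d. S $$ (a, c) * x $ (j*d+c))" if j: "j < N" for j
  proof -
    have "(kron (1\<^sub>m N) S *\<^sub>v x) $ (j*d+a) = (\<Sum>k<N. \<Sum>c<d. (1\<^sub>m N) $$ (j, k) * S $$ (a, c) * x $ (k*d+c))"
      by (rule kron_mult_vec_index2[OF _ S x j a]) simp
    also have "\<dots> = (\<Sum>k<N. (1\<^sub>m N :: real mat) $$ (j, k) * (\<Sum>c<d. S $$ (a, c) * x $ (k*d+c)))"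
      by (simp add: sum_distrib_left mult.assoc)
    also have "\<dots> = (\<Sum>c<d. S $$ (a, c) * x $ (j*d+c))" using j by (rule one_inner_sum2)
    finally show ?thesis .
  qed
  have "(kron G (1\<^sub>m d) *\<^sub>v (kron (1\<^sub>m N) S *\<^sub>v x)) $ p
      = (\<Sum>j<N. \<Sum>b<d. G $$ (i, j) * (1\<^sub>m d) $$ (a, b) * (kron (1\<^sub>m N) S *\<^sub>v x) $ (j*d+b))"
    unfolding i_def a_def by (rule kron_mult_vec_index[OF G _ K1 p]) simp
  also have "\<dots> = (\<Sum>j<N. G $$ (i, j) * (kron (1\<^sub>m N) S *\<^sub>v x) $ (j*d+a))"
    using a by (intro sum.cong refl) (rule one_inner_sum)
  also have "\<dots> = (\<Sum>j<N. G $$ (i, j) * (\<Sum>c<d. S $$ (a, c) * x $ (j*d+c)))"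
    by (intro sum.cong refl) (simp add: inner)
  also have "\<dots> = (\<Sum>j<N. \<Sum>c<d. G $$ (i, j) * S $$ (a, c) * x $ (j*d+c))"
    by (simp add: sum_distrib_left mult.assoc)
  also have "\<dots> = (kron G S *\<^sub>v x) $ p"
    unfolding i_def a_def by (rule kron_mult_vec_index[OF G S x p, symmetric])
  finally show "(kron G (1\<^sub>m d) *\<^sub>v (kron (1\<^sub>m N) S *\<^sub>v x)) $ p = (kron G S *\<^sub>v x) $ p" .
qed

lemma kron_sym:
  fixes G S :: "real mat"
  assumes G: "G \<in> carrier_mat N N" and S: "S \<in> carrier_mat d d"
    and sG: "transpose_mat G = G" and sS: "transpose_mat S = S"
  shows "transpose_mat (kron G S) = kron G S"
proof (rule eq_matI)
  note K = kron_carrier[OF G S]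
  fix p q assume "p < dim_row (kron G S)" "q < dim_col (kron G S)"
  then have p: "p < N*d" and q: "q < N*d" using K by auto
  have "transpose_mat (kron G S) $$ (p, q) = kron G S $$ (q, p)" using p q K by simp
  also have "\<dots> = G $$ (q div d, p div d) * S $$ (q mod d, p mod d)" by (rule kron_index[OF G S q p])
  also have "\<dots> = G $$ (p div d, q div d) * S $$ (p mod d, q mod d)"
    using sym_entry[OF G sG] sym_entry[OF S sS] p_decomp[OF p] p_decomp[OF q] by simp
  also have "\<dots> = kron G S $$ (p, q)" by (rule kron_index[OF G S p q, symmetric])
  finally show "transpose_mat (kron G S) $$ (p, q) = kron G S $$ (p, q)" .
qed (use kron_carrier[OF G S] in auto)

lemma kron_psd:
  fixes G S :: "real mat"
  assumes G: "G \<in> carrier_mat N N" and sG: "transpose_mat G = G"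
    and pG: "\<And>v. v \<in> carrier_vec N \<Longrightarrow> v \<bullet> (G *\<^sub>v v) \<ge> 0"
    and S: "S \<in> carrier_mat d d" and sS: "transpose_mat S = S"
    and pS: "\<And>v. v \<in> carrier_vec d \<Longrightarrow> v \<bullet> (S *\<^sub>v v) \<ge> 0"
    and x: "x \<in> carrier_vec (N*d)"
  shows "x \<bullet> (kron G S *\<^sub>v x) \<ge> 0"
proof (cases "N*d = 0")
  case True
  then show ?thesis using x by (simp add: scalar_prod_def)
next
  case False
  then have n: "N*d > 0" by simp
  note K = kron_carrier[OF G S]
  note Ks = kron_sym[OF G S sG sS]
  obtain m where m: "\<And>y. y \<in> carrier_vec (N*d) \<Longrightarrow> y \<bullet> (kron G S *\<^sub>v y) \<ge> m * (y \<bullet> y)"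
    and em: "eigenvalue (kron G S) m" using rayleigh_min[OF K Ks n] by blast
  have "m \<ge> 0"
  proof (rule ccontr)
    assume "\<not> m \<ge> 0"
    then have m0: "m < 0" by simp
    obtain v where v: "v \<in> carrier_vec (N*d)" "v \<noteq> 0\<^sub>v (N*d)" "kron G S *\<^sub>v v = m \<cdot>\<^sub>v v"
      using em K unfolding eigenvalue_def eigenvector_def by auto
    have I1: "(1\<^sub>m d :: real mat) \<in> carrier_mat d d" by simp
    have IN: "(1\<^sub>m N :: real mat) \<in> carrier_mat N N" by simp
    note T = kron_carrier[OF IN S]
    note Ts = kron_sym[OF IN S _ sS]
    define u where "u = kron (1\<^sub>m N) S *\<^sub>v v"
    have u: "u \<in> carrier_vec (N*d)" using T v by (simp add: u_def)
    have Hu: "kron G (1\<^sub>m d) *\<^sub>v u = m \<cdot>\<^sub>v v" unfolding u_def kron_mixed[OF G S v(1)] by (rule v(3))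
    have "u \<bullet> (kron G (1\<^sub>m d) *\<^sub>v u) \<ge> 0 * (u \<bullet> u)"
      by (rule kron_G1_lb[OF G _ u]) (use pG in simp)
    then have "m * (u \<bullet> v) \<ge> 0" using Hu u v by simp
    moreover have "u \<bullet> v = v \<bullet> (kron (1\<^sub>m N) S *\<^sub>v v)"
      unfolding u_def by (rule comm_scalar_prod[OF _ v(1)]) (use T v in simp)
    moreover have tv: "v \<bullet> (kron (1\<^sub>m N) S *\<^sub>v v) \<ge> 0" by (rule kron_1S_psd[OF S pS v(1)])
    ultimately have "v \<bullet> (kron (1\<^sub>m N) S *\<^sub>v v) = 0" using m0
      by (simp add: mult_le_0_iff zero_le_mult_iff)
    then have "kron (1\<^sub>m N) S *\<^sub>v v = 0\<^sub>v (N*d)"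
      by (intro psd_kernel[OF T Ts _ v(1)]) (use kron_1S_psd[OF S pS] in auto)
    then have u0: "u = 0\<^sub>v (N*d)" by (simp add: u_def)
    have z: "kron G (1\<^sub>m d) *\<^sub>v 0\<^sub>v (N*d) = 0\<^sub>v (N*d)"
      using kron_carrier[OF G I1] by (intro eq_vecI) (auto simp: scalar_prod_def)
    have "m \<cdot>\<^sub>v v = 0\<^sub>v (N*d)" using Hu u0 z by simp
    then have "v = 0\<^sub>v (N*d)" using m0 v(1)
      by (auto intro!: eq_vecI simp: vec_eq_iff dest!: arg_cong[where f = "\<lambda>w. w $ _"])
    then show False using v(2) by simp
  qed
  then show ?thesis using m[OF x] self_sp_nonneg[of x] by (meson order.trans mult_nonneg_nonneg)
qed



lemma vnorm_L2: "vnorm x = L2_set (\<lambda>i. x $ i) {..<dim_vec x}"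
  by (simp add: vnorm_def L2_set_def)

lemma sp_abs_le:
  fixes x y :: "real vec"
  assumes "x \<in> carrier_vec n" "y \<in> carrier_vec n"
  shows "\<bar>x \<bullet> y\<bar> \<le> vnorm x * vnorm y"
proof -
  have "\<bar>x \<bullet> y\<bar> = \<bar>\<Sum>i<n. x $ i * y $ i\<bar>" using assms by (simp add: scalar_prod_def atLeast0LessThan)
  also have "\<dots> \<le> (\<Sum>i<n. \<bar>x $ i\<bar> * \<bar>y $ i\<bar>)" by (rule order.trans[OF sum_abs]) (simp add: abs_mult)
  also have "\<dots> \<le> L2_set (\<lambda>i. x $ i) {..<n} * L2_set (\<lambda>i. y $ i) {..<n}" by (rule L2_set_mult_ineq)
  also have "\<dots> = vnorm x * vnorm y" using assms by (simp add: vnorm_L2)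
  finally show ?thesis .
qed

lemma entry_bound_norm:
  fixes D :: "real mat"
  assumes D: "D \<in> carrier_mat N N" and dl: "\<delta> \<ge> 0"
    and ent: "\<And>i j. i < N \<Longrightarrow> j < N \<Longrightarrow> \<bar>D $$ (i,j)\<bar> \<le> \<delta>"
    and v: "v \<in> carrier_vec N"
  shows "(D *\<^sub>v v) \<bullet> (D *\<^sub>v v) \<le> (real N * \<delta>)^2 * (v \<bullet> v)"
proof -
  have row: "((D *\<^sub>v v) $ i)^2 \<le> \<delta>^2 * real N * (v \<bullet> v)" if i: "i < N" for i
  proof -
    have "\<bar>(D *\<^sub>v v) $ i\<bar> = \<bar>\<Sum>j<N. D $$ (i,j) * v $ j\<bar>"
      using D v i by (simp add: mult_mat_vec_def scalar_prod_def atLeast0LessThan)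
    also have "\<dots> \<le> (\<Sum>j<N. \<bar>D $$ (i,j)\<bar> * \<bar>v $ j\<bar>)" by (rule order.trans[OF sum_abs]) (simp add: abs_mult)
    also have "\<dots> \<le> (\<Sum>j<N. \<delta> * \<bar>v $ j\<bar>)" by (intro sum_mono mult_right_mono ent i) auto
    also have "\<dots> = \<delta> * (\<Sum>j<N. \<bar>v $ j\<bar> * \<bar>1\<bar>)" by (simp add: sum_distrib_left)
    also have "\<dots> \<le> \<delta> * (L2_set (\<lambda>j. v $ j) {..<N} * L2_set (\<lambda>j. 1) {..<N})"
      by (intro mult_left_mono L2_set_mult_ineq dl)
    also have "\<dots> = \<delta> * (vnorm v * sqrt (real N))" using v by (simp add: vnorm_L2 L2_set_def)
    finally have h: "\<bar>(D *\<^sub>v v) $ i\<bar> \<le> \<delta> * (vnorm v * sqrt (real N))" .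
    have "((D *\<^sub>v v) $ i)^2 = \<bar>(D *\<^sub>v v) $ i\<bar>^2" by simp
    also have "\<dots> \<le> (\<delta> * (vnorm v * sqrt (real N)))^2" by (rule power_mono[OF h]) simp
    also have "\<dots> = \<delta>^2 * real N * (v \<bullet> v)" by (simp add: power_mult_distrib vnorm_sq)
    finally show ?thesis .
  qed
  have "(D *\<^sub>v v) \<bullet> (D *\<^sub>v v) = (\<Sum>i<N. ((D *\<^sub>v v) $ i)^2)"
    using D by (simp add: scalar_prod_def atLeast0LessThan power2_eq_square)
  also have "\<dots> \<le> (\<Sum>i<N. \<delta>^2 * real N * (v \<bullet> v))" by (intro sum_mono row) simp
  also have "\<dots> = (real N * \<delta>)^2 * (v \<bullet> v)" by (simp add: power2_eq_square)
  finally show ?thesis .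
qed

lemma kron_D1_norm:
  fixes D :: "real mat"
  assumes D: "D \<in> carrier_mat N N"
    and bnd: "\<And>v. v \<in> carrier_vec N \<Longrightarrow> (D *\<^sub>v v) \<bullet> (D *\<^sub>v v) \<le> c * (v \<bullet> v)"
    and w: "w \<in> carrier_vec (N*d)"
  shows "(kron D (1\<^sub>m d) *\<^sub>v w) \<bullet> (kron D (1\<^sub>m d) *\<^sub>v w) \<le> c * (w \<bullet> w)"
proof -
  have I1: "(1\<^sub>m d :: real mat) \<in> carrier_mat d d" by simp
  have Kw: "kron D (1\<^sub>m d) *\<^sub>v w \<in> carrier_vec (N*d)" using kron_carrier[OF D I1] w by simp
  have ent: "(kron D (1\<^sub>m d) *\<^sub>v w) $ (i*d+a) = (D *\<^sub>v colv N d w a) $ i" if i: "i < N" and a: "a < d" for i a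
  proof -
    have "(kron D (1\<^sub>m d) *\<^sub>v w) $ (i*d+a) = (\<Sum>j<N. \<Sum>b<d. D $$ (i, j) * (1\<^sub>m d) $$ (a, b) * w $ (j*d+b))"
      by (rule kron_mult_vec_index2[OF D I1 w i a])
    also have "\<dots> = (\<Sum>j<N. D $$ (i, j) * w $ (j*d+a))"
      using a by (intro sum.cong refl) (rule one_inner_sum)
    also have "\<dots> = (D *\<^sub>v colv N d w a) $ i"
      using D i by (simp add: mult_mat_vec_def scalar_prod_def atLeast0LessThan colv_def)
    finally show ?thesis .
  qed
  have "(kron D (1\<^sub>m d) *\<^sub>v w) \<bullet> (kron D (1\<^sub>m d) *\<^sub>v w)
      = (\<Sum>i<N. \<Sum>a<d. (kron D (1\<^sub>m d) *\<^sub>v w) $ (i*d+a) * (kron D (1\<^sub>m d) *\<^sub>v w) $ (i*d+a))"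
    by (rule sp_split[OF Kw Kw])
  also have "\<dots> = (\<Sum>i<N. \<Sum>a<d. (D *\<^sub>v colv N d w a) $ i * (D *\<^sub>v colv N d w a) $ i)"
    by (intro sum.cong refl) (simp add: ent)
  also have "\<dots> = (\<Sum>a<d. \<Sum>i<N. (D *\<^sub>v colv N d w a) $ i * (D *\<^sub>v colv N d w a) $ i)"
    by (rule sum.swap)
  also have "\<dots> = (\<Sum>a<d. (D *\<^sub>v colv N d w a) \<bullet> (D *\<^sub>v colv N d w a))"
    using D by (intro sum.cong refl) (simp add: scalar_prod_def atLeast0LessThan)
  also have "\<dots> \<le> (\<Sum>a<d. c * (colv N d w a \<bullet> colv N d w a))"
    by (intro sum_mono bnd) simp
  also have "\<dots> = c * (w \<bullet> w)" by (simp add: sp_colv[OF w] sum_distrib_left)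
  finally show ?thesis .
qed



lemma inv_solve:
  fixes A :: "real mat"
  assumes A: "A \<in> carrier_mat n n"
    and inj: "\<And>y. y \<in> carrier_vec n \<Longrightarrow> A *\<^sub>v y = 0\<^sub>v n \<Longrightarrow> y = 0\<^sub>v n"
    and b: "b \<in> carrier_vec n"
  shows "minv A *\<^sub>v b \<in> carrier_vec n" "A *\<^sub>v (minv A *\<^sub>v b) = b"
proof -
  have "det A \<noteq> 0" using det_0_iff_vec_prod_zero[OF A] inj by blast
  then have U: "A \<in> Units (ring_mat TYPE(real) n undefined)" by (rule det_non_zero_imp_unit[OF A])
  obtain B where B: "mat_inverse A = Some B"
    using mat_inverse(1)[OF A, of undefined] U by (cases "mat_inverse A") auto
  from mat_inverse(2)[OF A B] have AB: "A * B = 1\<^sub>m n" and Bc: "B \<in> carrier_mat n n" by auto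
  have mB: "minv A = B" by (simp add: minv_def B)
  show "minv A *\<^sub>v b \<in> carrier_vec n" using Bc b mB by simp
  have "A *\<^sub>v (B *\<^sub>v b) = (A * B) *\<^sub>v b" using A Bc b by simp
  also have "\<dots> = b" using AB b by simp
  finally show "A *\<^sub>v (minv A *\<^sub>v b) = b" using mB by simp
qed

lemma vnorm_triangle:
  fixes x y :: "real vec"
  assumes x: "x \<in> carrier_vec n" and y: "y \<in> carrier_vec n"
  shows "vnorm (x + y) \<le> vnorm x + vnorm y"
proof -
  have "(x + 1 \<cdot>\<^sub>v y) \<bullet> (x + 1 \<cdot>\<^sub>v y) = x \<bullet> x + 2 * 1 * (y \<bullet> x) + 1^2 * (y \<bullet> y)"
    by (rule sp_expand[OF x y])
  then have e: "(x + y) \<bullet> (x + y) = x \<bullet> x + 2 * (y \<bullet> x) + y \<bullet> y" by simp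
  have "y \<bullet> x \<le> vnorm y * vnorm x" using sp_abs_le[OF y x] by simp
  then have "(x + y) \<bullet> (x + y) \<le> (vnorm x + vnorm y)^2"
    using e by (simp add: power2_eq_square vnorm_sq[symmetric] algebra_simps)
  then show ?thesis using vnorm_le_from_sq vnorm_nonneg by (metis add_nonneg_nonneg)
qed

lemma prec_facts:
  fixes G S :: "real mat"
  assumes G: "G \<in> carrier_mat N N" and sG: "transpose_mat G = G"
    and pG: "\<forall>v\<in>carrier_vec N. v \<bullet> (G *\<^sub>v v) \<ge> 0"
    and S: "S \<in> carrier_mat d d" and sS: "transpose_mat S = S"
    and pS: "\<forall>v\<in>carrier_vec d. v \<bullet> (S *\<^sub>v v) \<ge> 0"
  shows "prec_mat t G S \<in> carrier_mat (N*d) (N*d)"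
    "transpose_mat (prec_mat t G S) = prec_mat t G S"
    "\<And>y. y \<in> carrier_vec (N*d) \<Longrightarrow>
       prec_mat t G S *\<^sub>v y = (alpha_t t)^2 \<cdot>\<^sub>v (kron G S *\<^sub>v y) + (sigma_t t)^2 \<cdot>\<^sub>v y"
    "\<And>y. y \<in> carrier_vec (N*d) \<Longrightarrow> y \<bullet> (prec_mat t G S *\<^sub>v y) \<ge> (sigma_t t)^2 * (y \<bullet> y)"
proof -
  note K = kron_carrier[OF G S]
  have dims: "dim_row G * dim_row S = N*d" using G S by simp
  show P: "prec_mat t G S \<in> carrier_mat (N*d) (N*d)"
    unfolding prec_mat_def dims using K by simp
  show "transpose_mat (prec_mat t G S) = prec_mat t G S"
    unfolding prec_mat_def dims using K kron_sym[OF G S sG sS]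
    by (intro eq_matI) (auto simp: sym_entry[OF K kron_sym[OF G S sG sS]])
  fix y :: "real vec" assume y: "y \<in> carrier_vec (N*d)"
  show Py: "prec_mat t G S *\<^sub>v y = (alpha_t t)^2 \<cdot>\<^sub>v (kron G S *\<^sub>v y) + (sigma_t t)^2 \<cdot>\<^sub>v y"
    unfolding prec_mat_def dims using K y
    by (subst add_mult_distrib_mat_vec[of _ "N*d" "N*d"]) (auto simp: smult_mat_vec)
  have Ky: "kron G S *\<^sub>v y \<in> carrier_vec (N*d)" using K y by simp
  have "y \<bullet> (prec_mat t G S *\<^sub>v y) = (alpha_t t)^2 * (y \<bullet> (kron G S *\<^sub>v y)) + (sigma_t t)^2 * (y \<bullet> y)"
    unfolding Py using y Ky by (simp add: scalar_prod_add_distrib[of _ "N*d"])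
  moreover have "y \<bullet> (kron G S *\<^sub>v y) \<ge> 0" by (rule kron_psd[OF G sG _ S sS _ y]) (use pG pS in auto)
  ultimately show "y \<bullet> (prec_mat t G S *\<^sub>v y) \<ge> (sigma_t t)^2 * (y \<bullet> y)" by simp
qed



lemma lambda_min_ge:
  fixes A :: "real mat"
  assumes A: "A \<in> carrier_mat n n" and sym: "transpose_mat A = A" and n: "n > 0"
    and lb: "\<And>y. y \<in> carrier_vec n \<Longrightarrow> y \<bullet> (A *\<^sub>v y) \<ge> mu * (y \<bullet> y)"
  shows "lambda_min A \<ge> mu"
proof -
  obtain m where em: "eigenvalue A m" using rayleigh_min[OF A sym n] by blast
  have fin: "finite {k. eigenvalue A k}" by (rule eig_finite[OF A])
  have "\<forall>k\<in>{k. eigenvalue A k}. mu \<le> k"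
  proof
    fix k assume "k \<in> {k. eigenvalue A k}"
    then obtain w where w: "w \<in> carrier_vec n" "w \<bullet> w > 0" "w \<bullet> (A *\<^sub>v w) = k * (w \<bullet> w)"
      using eig_quad[OF A] by blast
    then show "mu \<le> k" using lb[OF w(1)] by simp
  qed
  then show ?thesis unfolding lambda_min_def using fin em by (subst Min_ge_iff) auto
qed

lemma delta_r:
  fixes g :: "nat \<Rightarrow> real"
  assumes "i < N"
  shows "(\<Sum>j<N. g j * (if j = i then 1 else 0)) = g i"
proof -
  have "(\<Sum>j<N. g j * (if j = i then 1 else 0)) = (\<Sum>j<N. if j = i then g j else 0)"
    by (rule sum.cong) auto
  then show ?thesis using assms by simp
qed

lemma unit_qf:
  fixes G :: "real mat"
  assumes G: "G \<in> carrier_mat N N" and i: "i < N"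
  shows "unit_vec N i \<bullet> (G *\<^sub>v unit_vec N i) = G $$ (i, i)" "(unit_vec N i :: real vec) \<bullet> unit_vec N i = 1"
proof -
  have u: "unit_vec N i \<in> carrier_vec N" by simp
  have "unit_vec N i \<bullet> (G *\<^sub>v unit_vec N i) = (\<Sum>k<N. \<Sum>j<N. unit_vec N i $ k * G $$ (k, j) * unit_vec N i $ j)"
    by (rule qf_expand[OF G u u])
  also have "\<dots> = (\<Sum>k<N. (\<Sum>j<N. G $$ (k, j) * (if j = i then 1 else 0)) * (if k = i then 1 else 0))"
    using i by (intro sum.cong refl) (auto simp: sum_distrib_left sum_distrib_right intro!: sum.cong)
  also have "\<dots> = (\<Sum>j<N. G $$ (i, j) * (if j = i then 1 else 0))"
    by (rule delta_r[OF i])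
  also have "\<dots> = G $$ (i, i)" by (rule delta_r[OF i])
  finally show "unit_vec N i \<bullet> (G *\<^sub>v unit_vec N i) = G $$ (i, i)" .
  have "(unit_vec N i :: real vec) \<bullet> unit_vec N i = (\<Sum>k<N. (if k = i then 1 else 0) * (if k = i then 1 else 0))"
    using i by (auto simp: scalar_prod_def atLeast0LessThan intro!: sum.cong)
  also have "\<dots> = 1" using delta_r[OF i, of "\<lambda>k. if k = i then 1 else 0"] i by simp
  finally show "(unit_vec N i :: real vec) \<bullet> unit_vec N i = 1" .
qed

lemma vnorm_zero: "vnorm (0\<^sub>v n) = 0" by (simp add: vnorm_def)

lemma gamma_facts:
  assumes hf: "\<forall>i<N. \<forall>j<N. vnorm (e i - e j) = f (if i \<le> j then j - i else i - j)"
    and he: "\<forall>i<N. e i \<in> carrier_vec de"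
  shows "Gamma_mat N e nu l \<in> carrier_mat N N"
    "\<And>i j. i < N \<Longrightarrow> j < N \<Longrightarrow> Gamma_mat N e nu l $$ (i, j) = exp (- (vnorm (e i - e j) powr nu) / l)"
    "transpose_mat (Gamma_mat N e nu l) = Gamma_mat N e nu l"
    "\<And>i. i < N \<Longrightarrow> Gamma_mat N e nu l $$ (i, i) = 1"
proof -
  show "Gamma_mat N e nu l \<in> carrier_mat N N" by (simp add: Gamma_mat_def)
  show idx: "\<And>i j. i < N \<Longrightarrow> j < N \<Longrightarrow> Gamma_mat N e nu l $$ (i, j) = exp (- (vnorm (e i - e j) powr nu) / l)"
    by (simp add: Gamma_mat_def)
  show "transpose_mat (Gamma_mat N e nu l) = Gamma_mat N e nu l"
  proof (rule eq_matI)
    fix i j assume "i < dim_row (Gamma_mat N e nu l)" "j < dim_col (Gamma_mat N e nu l)"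
    then have i: "i < N" and j: "j < N" by (auto simp: Gamma_mat_def)
    have "vnorm (e j - e i) = vnorm (e i - e j)" using hf i j by auto
    then show "transpose_mat (Gamma_mat N e nu l) $$ (i, j) = Gamma_mat N e nu l $$ (i, j)"
      using i j by (simp add: Gamma_mat_def)
  qed (auto simp: Gamma_mat_def)
  fix i assume i: "i < N"
  have "e i - e i = 0\<^sub>v de" using he i by auto
  then show "Gamma_mat N e nu l $$ (i, i) = 1" using idx[OF i i] by (simp add: vnorm_zero)
qed

lemma gamma_offband:
  fixes c nu l L :: real and J k :: nat
  assumes c: "c > 0" and fc: "f k \<ge> c * real k" and kJ: "J \<le> k" and nu: "1 \<le> nu" and l: "l > 0"
    and L: "L > 0" and J: "2 / c * (l * L) powr (1 / nu) \<le> real J"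
  shows "exp (- (f k powr nu) / l) \<le> exp (- 2 * L)"
proof -
  define p where "p = (l * L) powr (1 / nu)"
  have lL: "l * L > 0" using l L by simp
  have p0: "p > 0" using l L by (simp add: p_def)
  have "2 * p \<le> c * real J" using J c by (simp add: p_def field_simps)
  also have "\<dots> \<le> c * real k" using kJ c by simp
  also have "\<dots> \<le> f k" by (rule fc)
  finally have fk: "2 * p \<le> f k" .
  have "(2 * p) powr nu \<le> f k powr nu" using fk p0 nu by (intro powr_mono2) auto
  moreover have "(2 * p) powr nu = 2 powr nu * (l * L)"
  proof -
    have "(2 * p) powr nu = 2 powr nu * p powr nu" using p0 by (simp add: powr_mult)
    also have "p powr nu = (l * L) powr (1 / nu * nu)" using lL by (simp add: p_def powr_powr)
    also have "\<dots> = l * L" using nu lL l L by simp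
    finally show ?thesis .
  qed
  moreover have "2 powr nu \<ge> 2" using powr_mono[OF nu, of 2] by simp
  ultimately have "2 * (l * L) \<le> f k powr nu" using lL
    by (metis dual_order.trans mult_right_mono less_imp_le)
  then have "- (f k powr nu) / l \<le> - 2 * L" using l by (simp add: field_simps)
  then show ?thesis by simp
qed

lemma kron_diff:
  fixes G Gb S :: "real mat"
  assumes G: "G \<in> carrier_mat N N" and Gb: "Gb \<in> carrier_mat N N" and S: "S \<in> carrier_mat d d"
    and y: "y \<in> carrier_vec (N*d)"
  shows "kron (G - Gb) S *\<^sub>v y = kron G S *\<^sub>v y - kron Gb S *\<^sub>v y"
proof (rule eq_vecI)
  have D: "G - Gb \<in> carrier_mat N N" using Gb by (rule minus_carrier_mat)
  fix p assume "p < dim_vec (kron G S *\<^sub>v y - kron Gb S *\<^sub>v y)"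
  then have p: "p < N*d" using kron_carrier[OF Gb S] by simp
  note pd = p_decomp[OF p]
  show "(kron (G - Gb) S *\<^sub>v y) $ p = (kron G S *\<^sub>v y - kron Gb S *\<^sub>v y) $ p"
    using kron_mult_vec_index[OF D S y p] kron_mult_vec_index[OF G S y p]
      kron_mult_vec_index[OF Gb S y p] p kron_carrier[OF G S] kron_carrier[OF Gb S] pd G Gb
    by (simp add: sum_subtractf[symmetric] left_diff_distrib)
qed (use kron_carrier[OF G S] kron_carrier[OF Gb S] kron_carrier[OF minus_carrier_mat[OF Gb, of G] S] in auto)



lemma band_index:
  assumes "G \<in> carrier_mat N N" "i < N" "j < N"
  shows "band_trunc J G $$ (i, j) = (if (if i \<le> j then j - i else i - j) < J then G $$ (i, j) else 0)"
  using assms by (simp add: band_trunc_def)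

lemma main_lemma:
  fixes c :: real and N d de J :: nat and Sig :: "real mat" and mu v :: "real vec"
    and e :: "nat \<Rightarrow> real vec" and f :: "nat \<Rightarrow> real" and r nu l t eps :: real
  assumes c: "c > 0" and N: "N > 0" and d: "d > 0" and Sg: "sym_psd d Sig"
    and mu: "mu \<in> carrier_vec (d*N)" and v: "v \<in> carrier_vec (d*N)"
    and he: "\<forall>i<N. e i \<in> carrier_vec de \<and> vnorm (e i) = r"
    and fc: "\<forall>k. f k \<ge> c * real k"
    and hf: "\<forall>i<N. \<forall>j<N. vnorm (e i - e j) = f (if i \<le> j then j - i else i - j)"
    and nu: "1 \<le> nu" and l: "0 < l" and t: "0 < t"
    and eps: "0 < eps" and epsG: "eps < lambda_min (Gamma_mat N e nu l)"
    and J: "2 / c * (l * ln (real N / (eps * sigma_t t))) powr (1 / nu) \<le> real J"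
  shows "\<exists>eta > 0. \<forall>K :: nat.
           1 * cond_num (prec_mat t (band_trunc J (Gamma_mat N e nu l)) Sig) * ln (1 / eps) \<le> real K \<longrightarrow>
           vnorm (gd_iter (prec_mat t (band_trunc J (Gamma_mat N e nu l)) Sig) (v - alpha_t t \<cdot>\<^sub>v mu) eta K
                  - score t (Gamma_mat N e nu l) Sig mu v)
             \<le> 2 * (sigma_t t) powr (-2) * vnorm (v - alpha_t t \<cdot>\<^sub>v mu) * eps"
proof -
  define n where "n = N * d"
  have n: "n > 0" using N d by (simp add: n_def)
  define G where "G = Gamma_mat N e nu l"
  define Gb where "Gb = band_trunc J G"
  define D where "D = G - Gb"
  define s where "s = sigma_t t"
  define a where "a = alpha_t t"
  define b where "b = v - a \<cdot>\<^sub>v mu"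
  define A where "A = prec_mat t G Sig"
  define M where "M = prec_mat t Gb Sig"
  have b: "b \<in> carrier_vec n" using mu v by (simp add: b_def n_def mult.commute)
  have et: "exp (- t) < 1" "exp (- t) > 0" using t by auto
  have s0: "s > 0" using et by (simp add: s_def sigma_t_def)
  have s2: "s^2 = 1 - exp (- t)" using et by (simp add: s_def sigma_t_def)
  have s1: "s < 1"
  proof -
    have "s^2 < 1^2" using s2 et by simp
    then show ?thesis by (rule power_less_imp_less_base) simp
  qed
  have S: "Sig \<in> carrier_mat d d" and sS: "transpose_mat Sig = Sig"
    and pS: "\<And>w. w \<in> carrier_vec d \<Longrightarrow> w \<bullet> (Sig *\<^sub>v w) \<ge> 0" using Sg by (auto simp: sym_psd_def)
  have he': "\<forall>i<N. e i \<in> carrier_vec de" using he by auto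
  note gf = gamma_facts[OF hf he', where nu=nu and l=l, folded G_def]
  have G: "G \<in> carrier_mat N N" and sG: "transpose_mat G = G" using gf by auto
  note sbG = spectral_bounds[OF G sG N]
  define mG where "mG = lambda_min G"
  have emG: "eps < mG" using epsG by (simp add: mG_def G_def)
  have mG1: "mG \<le> 1"
  proof -
    have "mG * ((unit_vec N 0 :: real vec) \<bullet> unit_vec N 0) \<le> unit_vec N 0 \<bullet> (G *\<^sub>v unit_vec N 0)"
      using sbG(1)[of "unit_vec N 0"] by (simp add: mG_def)
    then show ?thesis using unit_qf[OF G N] gf(4)[OF N] by simp
  qed
  have eps1: "eps < 1" using emG mG1 by simp
  have mG0: "mG > 0" using emG eps by simp
  have lbG: "\<And>w. w \<in> carrier_vec N \<Longrightarrow> mG * (w \<bullet> w) \<le> w \<bullet> (G *\<^sub>v w)"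
    using sbG(1) by (simp add: mG_def)
  define L where "L = ln (real N / (eps * s))"
  have es1: "eps * s < 1" using mult_strict_mono[OF eps1 s1] s0 by simp
  have Nes: "real N / (eps * s) > 1" using es1 N eps s0 by (simp add: divide_simps)
  have L0: "L > 0" using Nes by (simp add: L_def)
  define \<delta> where "\<delta> = (eps * s / real N)^2"
  have expL: "exp (- 2 * L) = \<delta>"
  proof -
    have e0: "exp L = real N / (eps * s)" using Nes by (simp add: L_def)
    have e1: "exp (2 * L) = (exp L)^2" using exp_of_nat_mult[of 2 L] by simp
    have e2: "exp (- 2 * L) = inverse (exp (2 * L))" using exp_minus[of "2*L"] by simp
    have "exp (- 2 * L) = inverse ((real N / (eps * s))^2)" unfolding e2 e1 e0 ..
    also have "\<dots> = (inverse (real N / (eps * s)))^2" by (rule power_inverse[symmetric])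
    also have "\<dots> = \<delta>" by (simp add: \<delta>_def)
    finally show ?thesis .
  qed
  have Gb: "Gb \<in> carrier_mat N N" using G by (simp add: Gb_def band_trunc_def)
  have D: "D \<in> carrier_mat N N" unfolding D_def using Gb by (rule minus_carrier_mat)
  have Dent: "\<bar>D $$ (i, j)\<bar> \<le> \<delta>" if i: "i < N" and j: "j < N" for i j
  proof (cases "(if i \<le> j then j - i else i - j) < J")
    case True
    then show ?thesis using i j G Gb by (simp add: D_def Gb_def band_index \<delta>_def)
  next
    case False
    define k where "k = (if i \<le> j then j - i else i - j)"
    have kJ: "J \<le> k" using False by (simp add: k_def)
    have Gij: "G $$ (i, j) = exp (- (f k powr nu) / l)" using gf(2)[OF i j] hf i j by (simp add: k_def)
    have "exp (- (f k powr nu) / l) \<le> exp (- 2 * L)"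
      by (rule gamma_offband[OF c _ kJ nu l L0]) (use fc J in \<open>auto simp: L_def s_def\<close>)
    then have "G $$ (i, j) \<le> \<delta>" unfolding Gij expL[symmetric] .
    moreover have "D $$ (i, j) = G $$ (i, j)" using i j G Gb False by (simp add: D_def Gb_def band_index)
    moreover have "G $$ (i, j) > 0" using Gij by simp
    ultimately show ?thesis by simp
  qed
  define \<theta> where "\<theta> = real N * \<delta>"
  have th0: "\<theta> \<ge> 0" by (simp add: \<theta>_def \<delta>_def)
  have the: "\<theta> \<le> eps^2"
  proof -
    have "\<theta> = eps^2 * s^2 / real N" using N by (simp add: \<theta>_def \<delta>_def power2_eq_square)
    also have "\<dots> \<le> eps^2 * 1 / 1"
      using N s0 s1 by (intro frac_le mult_left_mono) (auto simp: power_le_one)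
    finally show ?thesis by simp
  qed
  have Dn: "(D *\<^sub>v w) \<bullet> (D *\<^sub>v w) \<le> \<theta>^2 * (w \<bullet> w)" if w: "w \<in> carrier_vec N" for w
    using entry_bound_norm[OF D _ Dent w] by (simp add: \<theta>_def \<delta>_def)
  have GbD: "Gb = G - D" unfolding D_def using G Gb by (intro eq_matI) auto
  have sGb: "transpose_mat Gb = Gb"
  proof (rule eq_matI)
    fix i j assume "i < dim_row Gb" "j < dim_col Gb"
    then have i: "i < N" and j: "j < N" using Gb by auto
    show "transpose_mat Gb $$ (i, j) = Gb $$ (i, j)"
      using i j G Gb sym_entry[OF G sG i j] by (auto simp: Gb_def band_index)
  qed (use Gb in auto)
  have pGb: "w \<bullet> (Gb *\<^sub>v w) \<ge> 0" if w: "w \<in> carrier_vec N" for w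
  proof -
    have Dw: "D *\<^sub>v w \<in> carrier_vec N" using D w by simp
    have "w \<bullet> (Gb *\<^sub>v w) = w \<bullet> (G *\<^sub>v w) - w \<bullet> (D *\<^sub>v w)"
      unfolding GbD using G D w by (simp add: minus_mult_distrib_mat_vec[of _ N N] scalar_prod_minus_distrib[of _ N])
    moreover have "\<bar>w \<bullet> (D *\<^sub>v w)\<bar> \<le> \<theta> * (w \<bullet> w)"
    proof -
      have "\<bar>w \<bullet> (D *\<^sub>v w)\<bar> \<le> vnorm w * vnorm (D *\<^sub>v w)" by (rule sp_abs_le[OF w Dw])
      also have "vnorm (D *\<^sub>v w) \<le> \<theta> * vnorm w" by (rule vnorm_le_mult[OF Dn[OF w] th0])
      then have "vnorm w * vnorm (D *\<^sub>v w) \<le> vnorm w * (\<theta> * vnorm w)" by (simp add: mult_left_mono vnorm_nonneg)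
      finally show ?thesis by (simp add: vnorm_sq[symmetric] power2_eq_square algebra_simps)
    qed
    moreover have "\<theta> * (w \<bullet> w) \<le> mG * (w \<bullet> w)"
    proof (rule mult_right_mono)
      have "eps * eps \<le> eps * 1" using eps eps1 by (intro mult_left_mono) auto
      then show "\<theta> \<le> mG" using the emG by (simp add: power2_eq_square)
    qed (rule self_sp_nonneg)
    ultimately show ?thesis using lbG[OF w] by linarith
  qed
  have pG: "w \<bullet> (G *\<^sub>v w) \<ge> 0" if "w \<in> carrier_vec N" for w
    using lbG[OF that] mult_nonneg_nonneg[OF less_imp_le[OF mG0] self_sp_nonneg[of w]] by linarith
  have pG': "\<forall>w\<in>carrier_vec N. w \<bullet> (G *\<^sub>v w) \<ge> 0" using pG by auto
  have pGb': "\<forall>w\<in>carrier_vec N. w \<bullet> (Gb *\<^sub>v w) \<ge> 0" using pGb by auto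
  have pS': "\<forall>w\<in>carrier_vec d. w \<bullet> (Sig *\<^sub>v w) \<ge> 0" using pS by auto
  note PA = prec_facts[OF G sG pG' S sS pS', where t=t, folded A_def n_def s_def]
  note PM = prec_facts[OF Gb sGb pGb' S sS pS', where t=t, folded M_def n_def s_def]
  have injA: "y = 0\<^sub>v n" if "y \<in> carrier_vec n" "A *\<^sub>v y = 0\<^sub>v n" for y
  proof -
    have "s^2 * (y \<bullet> y) \<le> 0" using PA(4)[OF that(1)] that by simp
    then have "y \<bullet> y \<le> 0" using s0 by (simp add: mult_le_0_iff)
    then have "y \<bullet> y = 0" using self_sp_nonneg[of y] by linarith
    then show ?thesis using self_sp_zero that(1) by blast
  qed
  have injM: "y = 0\<^sub>v n" if "y \<in> carrier_vec n" "M *\<^sub>v y = 0\<^sub>v n" for y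
  proof -
    have "s^2 * (y \<bullet> y) \<le> 0" using PM(4)[OF that(1)] that by simp
    then have "y \<bullet> y \<le> 0" using s0 by (simp add: mult_le_0_iff)
    then have "y \<bullet> y = 0" using self_sp_nonneg[of y] by linarith
    then show ?thesis using self_sp_zero that(1) by blast
  qed
  define y where "y = minv A *\<^sub>v b"
  define yb where "yb = minv M *\<^sub>v b"
  have y: "y \<in> carrier_vec n" and Ay: "A *\<^sub>v y = b" using inv_solve[OF PA(1) injA b] by (auto simp: y_def)
  have yb: "yb \<in> carrier_vec n" and Myb: "M *\<^sub>v yb = b" using inv_solve[OF PM(1) injM b] by (auto simp: yb_def)
  have score: "score t G Sig mu v = - y" by (simp add: score_def y_def A_def b_def a_def)
  have I1: "(1\<^sub>m d :: real mat) \<in> carrier_mat d d" by simp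
  have IN: "(1\<^sub>m N :: real mat) \<in> carrier_mat N N" by simp
  have Kc: "kron G Sig \<in> carrier_mat n n" using kron_carrier[OF G S] by (simp add: n_def)
  have Kbc: "kron Gb Sig \<in> carrier_mat n n" using kron_carrier[OF Gb S] by (simp add: n_def)
  have Tc: "kron (1\<^sub>m N) Sig \<in> carrier_mat n n" using kron_carrier[OF IN S] by (simp add: n_def)
  have Hc: "kron G (1\<^sub>m d) \<in> carrier_mat n n" using kron_carrier[OF G I1] by (simp add: n_def)
  have Dc: "kron D (1\<^sub>m d) \<in> carrier_mat n n" using kron_carrier[OF D I1] by (simp add: n_def)
  have yn: "y \<in> carrier_vec (N*d)" using y by (simp add: n_def)
  define w where "w = a^2 \<cdot>\<^sub>v (kron G Sig *\<^sub>v y)"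
  have wc: "w \<in> carrier_vec n" using Kc y by (simp add: w_def)
  have bw: "b = w + s^2 \<cdot>\<^sub>v y" using Ay PA(3)[OF y] by (simp add: w_def a_def)
  have yK: "y \<bullet> (kron G Sig *\<^sub>v y) \<ge> 0" by (rule kron_psd[OF G sG _ S sS _ yn]) (use pG pS in auto)
  have ww: "w \<bullet> w \<le> b \<bullet> b"
  proof -
    have "b \<bullet> b = w \<bullet> w + 2 * s^2 * (y \<bullet> w) + (s^2)^2 * (y \<bullet> y)"
      unfolding bw by (rule sp_expand[OF wc y])
    moreover have "y \<bullet> w = a^2 * (y \<bullet> (kron G Sig *\<^sub>v y))" using y Kc by (simp add: w_def)
    moreover have "y \<bullet> w \<ge> 0" using yK by (simp add: \<open>y \<bullet> w = _\<close>)
    moreover have "y \<bullet> y \<ge> 0" by (rule self_sp_nonneg)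
    ultimately show ?thesis by simp
  qed
  define z where "z = a^2 \<cdot>\<^sub>v (kron (1\<^sub>m N) Sig *\<^sub>v y)"
  have zc: "z \<in> carrier_vec n" using Tc y by (simp add: z_def)
  have zn: "z \<in> carrier_vec (N*d)" using zc by (simp add: n_def)
  have Ty: "kron (1\<^sub>m N) Sig *\<^sub>v y \<in> carrier_vec (N*d)" using Tc y by (simp add: n_def)
  have Hz: "kron G (1\<^sub>m d) *\<^sub>v z = w"
    unfolding z_def w_def using Hc Ty kron_mixed[OF G S yn] by (simp add: mult_mat_vec n_def)
  have zz: "mG^2 * (z \<bullet> z) \<le> w \<bullet> w"
  proof -
    have "z \<bullet> (kron G (1\<^sub>m d) *\<^sub>v z) \<ge> mG * (z \<bullet> z)"
      by (rule kron_G1_lb[OF G _ zn]) (use lbG in auto)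
    from qf_lower_norm[OF Hc _ this zc] mG0 show ?thesis by (simp add: Hz)
  qed
  define q where "q = kron D (1\<^sub>m d) *\<^sub>v z"
  have qc: "q \<in> carrier_vec n" using Dc zc by (simp add: q_def)
  have q_eq: "q = a^2 \<cdot>\<^sub>v (kron G Sig *\<^sub>v y) - a^2 \<cdot>\<^sub>v (kron Gb Sig *\<^sub>v y)"
  proof -
    have "q = a^2 \<cdot>\<^sub>v (kron D (1\<^sub>m d) *\<^sub>v (kron (1\<^sub>m N) Sig *\<^sub>v y))"
      unfolding q_def z_def using Dc Ty by (simp add: mult_mat_vec n_def)
    also have "kron D (1\<^sub>m d) *\<^sub>v (kron (1\<^sub>m N) Sig *\<^sub>v y) = kron D Sig *\<^sub>v y"
      by (rule kron_mixed[OF D S yn])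
    also have "kron D Sig *\<^sub>v y = kron G Sig *\<^sub>v y - kron Gb Sig *\<^sub>v y"
      unfolding D_def by (rule kron_diff[OF G Gb S yn])
    finally have "q = a^2 \<cdot>\<^sub>v (kron G Sig *\<^sub>v y - kron Gb Sig *\<^sub>v y)" .
    then show ?thesis using Kc Kbc y
      by (intro eq_vecI) (simp_all add: right_diff_distrib)
  qed
  define r where "r = M *\<^sub>v (y - yb)"
  have r_eq: "r = - q"
  proof -
    have "r = M *\<^sub>v y - M *\<^sub>v yb" unfolding r_def using PM(1) y yb by (rule mult_minus_distrib_mat_vec)
    also have "M *\<^sub>v yb = a^2 \<cdot>\<^sub>v (kron G Sig *\<^sub>v y) + s^2 \<cdot>\<^sub>v y" using Myb bw w_def by simp
    also have "M *\<^sub>v y = a^2 \<cdot>\<^sub>v (kron Gb Sig *\<^sub>v y) + s^2 \<cdot>\<^sub>v y" using PM(3)[OF y] by (simp add: a_def)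
    finally have "r = (a^2 \<cdot>\<^sub>v (kron Gb Sig *\<^sub>v y) + s^2 \<cdot>\<^sub>v y) - (a^2 \<cdot>\<^sub>v (kron G Sig *\<^sub>v y) + s^2 \<cdot>\<^sub>v y)" .
    then show ?thesis unfolding q_eq using Kc Kbc y
      by (intro eq_vecI) simp_all
  qed
  have rr: "r \<bullet> r = q \<bullet> q" using r_eq qc by simp
  have qq: "q \<bullet> q \<le> \<theta>^2 * (z \<bullet> z)" unfolding q_def by (rule kron_D1_norm[OF D Dn zn])
  have ymy: "y - yb \<in> carrier_vec n" using y yb by simp
  have rlow: "(s^2)^2 * ((y - yb) \<bullet> (y - yb)) \<le> r \<bullet> r"
    unfolding r_def by (rule qf_lower_norm[OF PM(1) _ PM(4)[OF ymy] ymy]) simp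
  have themG: "\<theta> \<le> eps * mG"
  proof -
    have "eps * eps \<le> eps * mG" using eps emG by (intro mult_left_mono) auto
    then show ?thesis using the by (simp add: power2_eq_square)
  qed
  have th2: "\<theta>^2 \<le> (eps * mG)^2" using themG th0 by (rule power_mono)
  have "\<theta>^2 * (z \<bullet> z) \<le> (eps * mG)^2 * (z \<bullet> z)" using th2 self_sp_nonneg[of z] by (rule mult_right_mono)
  also have "\<dots> = eps^2 * (mG^2 * (z \<bullet> z))" by (simp add: power_mult_distrib)
  also have "\<dots> \<le> eps^2 * (b \<bullet> b)" using zz ww by (intro mult_left_mono) auto
  finally have "(s^2)^2 * ((y - yb) \<bullet> (y - yb)) \<le> eps^2 * (b \<bullet> b)" using rlow rr qq by linarith
  then have "(y - yb) \<bullet> (y - yb) \<le> (eps / s^2)^2 * (b \<bullet> b)" using s0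
    by (simp add: power_divide divide_simps mult.commute)
  then have trunc: "vnorm (y - yb) \<le> (eps / s^2) * vnorm b" using eps s0 by (intro vnorm_le_mult) auto
  have ybn: "vnorm yb \<le> (1 / s^2) * vnorm b"
  proof -
    have "(s^2)^2 * (yb \<bullet> yb) \<le> (M *\<^sub>v yb) \<bullet> (M *\<^sub>v yb)"
      by (rule qf_lower_norm[OF PM(1) _ PM(4)[OF yb] yb]) simp
    then have "yb \<bullet> yb \<le> (1 / s^2)^2 * (b \<bullet> b)" using s0 Myb
      by (simp add: power_divide divide_simps mult.commute)
    then show ?thesis by (intro vnorm_le_mult) auto
  qed
  have Mn: "M \<in> carrier_mat n n" using PM(1) by (simp add: n_def)
  have Msym: "transpose_mat M = M" by (rule PM(2))
  have lmM: "lambda_min M \<ge> s^2"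
    by (rule lambda_min_ge[OF Mn Msym n]) (use PM(4) in \<open>auto simp: n_def\<close>)
  have "s^2 > 0" using s0 by simp
  then have lm0: "lambda_min M > 0" using lmM by linarith
  have lML: "lambda_min M \<le> lambda_max M" using spectral_bounds(3)[OF Mn Msym n] .
  have LM0: "lambda_max M > 0" using lm0 lML by simp
  show ?thesis
  proof (intro exI[of _ "1 / lambda_max M"] conjI allI impI)
    show "1 / lambda_max M > 0" using LM0 by simp
    fix K :: nat
    assume KK: "1 * cond_num (prec_mat t (band_trunc J (Gamma_mat N e nu l)) Sig) * ln (1 / eps) \<le> real K"
    define \<rho> where "\<rho> = lambda_min M / lambda_max M"
    have rho0: "\<rho> > 0" and rho1: "\<rho> \<le> 1" using lm0 LM0 lML by (auto simp: \<rho>_def divide_simps)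
    have Kr: "ln (1 / eps) \<le> \<rho> * real K"
    proof -
      have "cond_num M * ln (1 / eps) \<le> real K" using KK by (simp add: M_def Gb_def G_def)
      then have "\<rho> * (cond_num M * ln (1 / eps)) \<le> \<rho> * real K" using rho0 by (intro mult_left_mono) auto
      moreover have "\<rho> * cond_num M = 1" using lm0 LM0 by (simp add: \<rho>_def cond_num_def)
      ultimately show ?thesis by (simp add: mult.assoc[symmetric])
    qed
    have qK: "(1 - \<rho>)^K \<le> eps"
    proof -
      have "(1 - \<rho>)^K \<le> (exp (- \<rho>))^K"
        using rho1 exp_ge_add_one_self[of "- \<rho>"] by (intro power_mono) auto
      also have "\<dots> = exp (- (\<rho> * real K))" using exp_of_nat_mult[of K "- \<rho>"] by (simp add: mult.commute)
      also have "\<dots> \<le> exp (- ln (1 / eps))" using Kr by simp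
      also have "\<dots> = eps" using eps by (simp add: ln_div)
      finally show ?thesis .
    qed
    have gdb: "vnorm (gd_iter M b (1 / lambda_max M) K + yb) \<le> (1 - \<rho>)^K * vnorm yb"
      using gd_conv[OF Mn Msym n b yb Myb lm0] by (simp add: \<rho>_def)
    have gdc: "gd_iter M b (1 / lambda_max M) K \<in> carrier_vec n" by (rule gd_dim[OF Mn b])
    have "vnorm (gd_iter M b (1 / lambda_max M) K + yb) \<le> eps * ((1 / s^2) * vnorm b)"
    proof -
      have "(1 - \<rho>)^K * vnorm yb \<le> eps * vnorm yb"
        using qK vnorm_nonneg by (rule mult_right_mono)
      also have "\<dots> \<le> eps * ((1 / s^2) * vnorm b)" using ybn eps by (intro mult_left_mono) auto
      finally show ?thesis using gdb by simp
    qed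
    moreover have "gd_iter M b (1 / lambda_max M) K - score t G Sig mu v
        = (gd_iter M b (1 / lambda_max M) K + yb) + (y - yb)"
      unfolding score using gdc y yb by (intro eq_vecI) simp_all
    moreover have "vnorm ((gd_iter M b (1 / lambda_max M) K + yb) + (y - yb))
        \<le> vnorm (gd_iter M b (1 / lambda_max M) K + yb) + vnorm (y - yb)"
      by (rule vnorm_triangle[of _ n]) (use gdc yb y in auto)
    moreover have "s powr (-2) = 1 / s^2"
    proof -
      have "s powr (-2) = inverse (s powr 2)" by (rule powr_minus)
      also have "s powr 2 = s^2" using s0 powr_realpow[of s 2] by simp
      finally show ?thesis by (simp add: inverse_eq_divide)
    qed
    ultimately have X: "vnorm (gd_iter M b (1 / lambda_max M) K - score t G Sig mu v)
        \<le> 2 * (eps * ((1 / s^2) * vnorm b))" and sp: "s powr (-2) = 1 / s^2" using trunc by auto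
    have "2 * (eps * ((1 / s^2) * vnorm b)) = 2 * s powr (-2) * vnorm b * eps" unfolding sp by simp
    with X have "vnorm (gd_iter M b (1 / lambda_max M) K - score t G Sig mu v)
        \<le> 2 * s powr (-2) * vnorm b * eps" by simp
    then show "vnorm (gd_iter (prec_mat t (band_trunc J (Gamma_mat N e nu l)) Sig) (v - alpha_t t \<cdot>\<^sub>v mu)
            (1 / lambda_max M) K - score t (Gamma_mat N e nu l) Sig mu v)
          \<le> 2 * sigma_t t powr - 2 * vnorm (v - alpha_t t \<cdot>\<^sub>v mu) * eps"
      by (simp add: M_def Gb_def G_def b_def a_def s_def)
  qed
qed


theorem corollary1:
  fixes c :: real
  assumes c_pos: "c > 0"
  shows "\<exists>CJ CK :: real. CJ > 0 \<and> CK > 0 \<and>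
    (\<forall>N d de :: nat. \<forall>Sig :: real mat. \<forall>mu v :: real vec. \<forall>e :: nat \<Rightarrow> real vec.
     \<forall>f :: nat \<Rightarrow> real. \<forall>r nu l t eps :: real.
       N > 0 \<longrightarrow> d > 0 \<longrightarrow> sym_psd d Sig \<longrightarrow>
       mu \<in> carrier_vec (d * N) \<longrightarrow> v \<in> carrier_vec (d * N) \<longrightarrow>
       (\<forall>i<N. e i \<in> carrier_vec de \<and> vnorm (e i) = r) \<longrightarrow>
       mono f \<longrightarrow> (\<forall>k>0. f k > 0) \<longrightarrow> (\<forall>k. f k \<ge> c * real k) \<longrightarrow>
       (\<forall>i<N. \<forall>j<N. vnorm (e i - e j) = f (if i \<le> j then j - i else i - j)) \<longrightarrow>
       1 \<le> nu \<longrightarrow> nu \<le> 2 \<longrightarrow> 0 < l \<longrightarrow> l \<le> c powr nu \<longrightarrow>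
       0 < t \<longrightarrow>
       0 < eps \<longrightarrow> eps < lambda_min (Gamma_mat N e nu l) \<longrightarrow>
       (\<forall>J :: nat.
          CJ * (l * ln (real N / (eps * sigma_t t))) powr (1 / nu) \<le> real J \<longrightarrow> J < N \<longrightarrow>
          (let G = Gamma_mat N e nu l;
               M = prec_mat t (band_trunc J G) Sig;
               b = v - alpha_t t \<cdot>\<^sub>v mu
           in \<exists>eta > 0. \<forall>K :: nat.
                CK * cond_num M * ln (1 / eps) \<le> real K \<longrightarrow>
                vnorm (gd_iter M b eta K - score t G Sig mu v)
                  \<le> 2 * (sigma_t t) powr (-2) * vnorm b * eps)))"
proof -
  have CJ: "2 / c > 0" using c_pos by simp
  show ?thesis
  proof (rule exI[of _ "2 / c"], rule exI[of _ "1::real"], intro conjI allI impI CJ)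
    show "(1::real) > 0" by simp
  next
    fix N d de :: nat and Sig :: "real mat" and mu v :: "real vec" and e :: "nat \<Rightarrow> real vec"
      and f :: "nat \<Rightarrow> real" and r nu l t eps :: real and J :: nat
    assume "N > 0" "d > 0" "sym_psd d Sig" "mu \<in> carrier_vec (d * N)" "v \<in> carrier_vec (d * N)"
      "\<forall>i<N. e i \<in> carrier_vec de \<and> vnorm (e i) = r" "mono f" "\<forall>k>0. f k > 0"
      "\<forall>k. f k \<ge> c * real k"
      "\<forall>i<N. \<forall>j<N. vnorm (e i - e j) = f (if i \<le> j then j - i else i - j)"
      "1 \<le> nu" "nu \<le> 2" "0 < l" "l \<le> c powr nu" "0 < t" "0 < eps"
      "eps < lambda_min (Gamma_mat N e nu l)"
      "2 / c * (l * ln (real N / (eps * sigma_t t))) powr (1 / nu) \<le> real J" "J < N"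
    then show "let G = Gamma_mat N e nu l;
               M = prec_mat t (band_trunc J G) Sig;
               b = v - alpha_t t \<cdot>\<^sub>v mu
           in \<exists>eta > 0. \<forall>K :: nat.
                1 * cond_num M * ln (1 / eps) \<le> real K \<longrightarrow>
                vnorm (gd_iter M b eta K - score t G Sig mu v)
                  \<le> 2 * (sigma_t t) powr (-2) * vnorm b * eps"
      unfolding Let_def by (intro main_lemma[OF c_pos]) auto
  qed
qed

end
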